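(* Let $L>0$, let $p,w\in C^2([0,L])$ be positive-valued functions with $p^{-1},w^{-1}\in L^\infty(]0,L[)$, and let $q\in C([0,L])$ be nonnegative-valued. Let $T$ be the operator $Tu=-\frac{1}{w}(pu')'+\frac{q}{w}u$ with domain $D(T)=\{u\in L^2(]0,L[,w(x)dx):\ Tu\in L^2(]0,L[,w(x)dx),\ u(0)=u(L)=0\}$. Let $\lambda>0$ and let $\phi_\lambda\in D(T)$ be a nonzero solution of $T\phi_\lambda=\lambda\phi_\lambda$. Define $y(x)=\int_0^x\sqrt{w(s)/p(s)}\,ds$ for $x\in[0,L]$, $B=\int_0^L\sqrt{w(s)/p(s)}\,ds$, let $x(y)$ denote the inverse of $y:[0,L]\to[0,B]$, and set $f(y)=(w(x(y))p(x(y)))^{1/4}$ and $Q(y)=f''(y)/f(y)+q(x(y))/w(x(y))$ for $y\in[0,B]$. Let $$a(B,\lambda)=\frac{B\|Q\|_\infty}{2\sqrt{\lambda}},\qquad b(B,\lambda)=\left(\frac{B^3}{12}+\frac{5B}{32\lambda}+\frac{5}{32\lambda^{3/2}}\right)^{1/4}\frac{\|Q\|_4}{\sqrt\lambda},$$ where the norms of $Q$ are taken in $L^\infty(]0,B[)$ and $L^4(]0,B[)$. Let $\Phi_\lambda(y)=\sin(\sqrt\lambda\, y)$ for $y\in[0,B]$, and set $$\beta(p,w)=\|w\|_\infty^{-2}\,\|p^{-1/2}w^{-3/2}\|_\infty^{-1},\qquad \gamma(p,w)=\|w^{-1}\|_\infty^{2}\,\|p^{1/2}w^{3/2}\|_\infty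 .$$ If $a(B,\lambda)<1$ and $b(B,\lambda)<1$, then $$\beta(p,w)\left(\frac{1-b(B,\lambda)}{1+a(B,\lambda)}\right)^4\le\frac{\alpha(\phi_\lambda)}{\alpha(\Phi_\lambda)}\le\gamma(p,w)\left(\frac{1+b(B,\lambda)}{1-a(B,\lambda)}\right)^4 .$$
   Context: For a function $g$ on an interval $I$ (here $I=]0,L[$ or $]0,B[$), $\|g\|_t$ denotes the (unweighted, Lebesgue measure) norm of $L^t(I)$, and the localization coefficient is $\alpha(g)=\|g\|_2^4/\|g\|_4^4$; thus $\alpha(\phi_\lambda)$ uses norms on $]0,L[$ and $\alpha(\Phi_\lambda)$ uses norms on $]0,B[$. The norms $\|w\|_\infty$, $\|w^{-1}\|_\infty$, $\|p^{\pm1/2}w^{\pm3/2}\|_\infty$ are sup norms on $]0,L[$. *)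

theory Defs
  imports "HOL-Analysis.Analysis"
begin

definition C2_on :: "real \<Rightarrow> real \<Rightarrow> (real \<Rightarrow> real) \<Rightarrow> bool" where
  "C2_on a b g \<longleftrightarrow> (\<exists>g1 g2.
      (\<forall>x\<in>{a..b}. (g has_real_derivative g1 x) (at x within {a..b})) \<and>
      (\<forall>x\<in>{a..b}. (g1 has_real_derivative g2 x) (at x within {a..b})) \<and>
      continuous_on {a..b} g2)"

definition Lnorm :: "real \<Rightarrow> real \<Rightarrow> real \<Rightarrow> (real \<Rightarrow> real) \<Rightarrow> real" where
  "Lnorm a b t g = (integral {a..b} (\<lambda>x. \<bar>g x\<bar> powr t)) powr (1 / t)"

definition supnorm :: "real set \<Rightarrow> (real \<Rightarrow> real) \<Rightarrow> real" where
  "supnorm S g = (SUP x\<in>S. \<bar>g x\<bar>)"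

definition loc_coeff :: "real \<Rightarrow> real \<Rightarrow> (real \<Rightarrow> real) \<Rightarrow> real" where
  "loc_coeff a b g = (Lnorm a b 2 g) ^ 4 / (Lnorm a b 4 g) ^ 4"

end

theory Submission
  imports Defs
begin

lemma quad_disc:
  fixes A C D :: real
  assumes h: "\<And>t. 0 \<le> A + 2*t*C + t^2*D" and D0: "D \<ge> 0"
  shows "C^2 \<le> A*D"
proof (cases "D = 0")
  case True
  show ?thesis
  proof (rule ccontr)
    assume "\<not> ?thesis"
    hence "C \<noteq> 0" using True by simp
    have "0 \<le> A + 2*(-(A+1)/(2*C))*C" using h[of "-(A+1)/(2*C)"] True by simp
    also have "\<dots> = -1" using \<open>C \<noteq> 0\<close> by (simp add: field_simps)
    finally show False by simp
  qed
next
  case False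
  have Dp: "D > 0" using False D0 by simp
  have "0 \<le> A + 2*(-C/D)*C + (-C/D)^2*D" by (rule h)
  also have "\<dots> = (A*D - C^2)/D" using Dp by (simp add: field_simps power2_eq_square)
  finally show ?thesis using Dp by (simp add: divide_nonneg_pos zero_le_divide_iff)
qed

lemma int_cmul: "f integrable_on S \<Longrightarrow> (\<lambda>x. (c::real) * f x) integrable_on S"
  using integrable_cmul[of f S c] by simp

lemma integral_cmul_real: "integral S (\<lambda>x. (c::real) * f x) = c * integral S f"
  using integral_cmul[of S c f] by simp

lemma cs_integral:
  fixes f g :: "real \<Rightarrow> real"
  assumes f: "continuous_on {a..b} f" and g: "continuous_on {a..b} g"
  shows "(integral {a..b} (\<lambda>x. f x * g x))^2 \<le> integral {a..b} (\<lambda>x. (f x)^2) * integral {a..b} (\<lambda>x. (g x)^2)"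
proof -
  have i1: "(\<lambda>x. (f x)^2) integrable_on {a..b}" by (intro integrable_continuous_real continuous_intros f)
  have i2: "(\<lambda>x. f x * g x) integrable_on {a..b}" by (intro integrable_continuous_real continuous_intros f g)
  have i3: "(\<lambda>x. (g x)^2) integrable_on {a..b}" by (intro integrable_continuous_real continuous_intros g)
  show ?thesis
  proof (rule quad_disc)
    show "integral {a..b} (\<lambda>x. (g x)^2) \<ge> 0" using i3 by (rule integral_nonneg) auto
    fix t :: real
    have "(\<lambda>x. (f x + t * g x)^2) integrable_on {a..b}" by (intro integrable_continuous_real continuous_intros f g)
    hence "0 \<le> integral {a..b} (\<lambda>x. (f x + t * g x)^2)" by (rule integral_nonneg) auto
    also have "integral {a..b} (\<lambda>x. (f x + t * g x)^2) = integral {a..b} (\<lambda>x. (f x)^2 + (2*t) * (f x * g x) + t^2 * (g x)^2)"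
      by (simp add: power2_eq_square algebra_simps)
    also have "\<dots> = integral {a..b} (\<lambda>x. (f x)^2) + 2*t*integral {a..b} (\<lambda>x. f x * g x) + t^2*integral {a..b} (\<lambda>x. (g x)^2)"
      using i1 i2 i3 by (simp add: integral_add integrable_add int_cmul integral_cmul_real)
    finally show "0 \<le> integral {a..b} (\<lambda>x. (f x)^2) + 2*t*integral {a..b} (\<lambda>x. f x * g x) + t^2*integral {a..b} (\<lambda>x. (g x)^2)" .
  qed
qed

lemma int_nonneg_cont:
  fixes h :: "real \<Rightarrow> real"
  assumes "continuous_on {a..b} h" "\<And>x. x \<in> {a..b} \<Longrightarrow> h x \<ge> 0"
  shows "integral {a..b} h \<ge> 0"
  using assms by (intro integral_nonneg integrable_continuous_real) auto

lemma integral_pos_cont: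
  fixes h :: "real \<Rightarrow> real"
  assumes c: "continuous_on {a..b} h" and nn: "\<And>x. x \<in> {a..b} \<Longrightarrow> h x \<ge> 0"
    and ab: "a < b" and x0: "x0 \<in> {a..b}" and hx0: "h x0 \<noteq> 0"
  shows "integral {a..b} h > 0"
proof -
  have "integral (cbox a b) h = 0 \<longleftrightarrow> (\<forall>x \<in> cbox a b. h x = 0)"
    using c nn ab by (intro integral_cbox_eq_0_iff) auto
  hence "integral {a..b} h \<noteq> 0" using x0 hx0 by auto
  moreover have "integral {a..b} h \<ge> 0" using c nn by (rule int_nonneg_cont)
  ultimately show ?thesis by simp
qed

lemma n2_tri:
  fixes f g :: "real \<Rightarrow> real"
  assumes f: "continuous_on {a..b} f" and g: "continuous_on {a..b} g"
  shows "sqrt (integral {a..b} (\<lambda>x. (f x + g x)^2)) \<le> sqrt (integral {a..b} (\<lambda>x. (f x)^2)) + sqrt (integral {a..b} (\<lambda>x. (g x)^2))"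
proof -
  define A where "A = integral {a..b} (\<lambda>x. (f x)^2)"
  define C where "C = integral {a..b} (\<lambda>x. f x * g x)"
  define D where "D = integral {a..b} (\<lambda>x. (g x)^2)"
  have i1: "(\<lambda>x. (f x)^2) integrable_on {a..b}" by (intro integrable_continuous_real continuous_intros f)
  have i2: "(\<lambda>x. f x * g x) integrable_on {a..b}" by (intro integrable_continuous_real continuous_intros f g)
  have i3: "(\<lambda>x. (g x)^2) integrable_on {a..b}" by (intro integrable_continuous_real continuous_intros g)
  have A0: "A \<ge> 0" unfolding A_def by (rule int_nonneg_cont) (auto intro!: continuous_intros f)
  have D0: "D \<ge> 0" unfolding D_def by (rule int_nonneg_cont) (auto intro!: continuous_intros g)
  have cs: "C^2 \<le> A * D" unfolding A_def C_def D_def by (rule cs_integral[OF f g])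
  have "C \<le> sqrt (A*D)" using cs by (metis abs_ge_self order_trans real_sqrt_abs real_sqrt_le_mono)
  hence C1: "C \<le> sqrt A * sqrt D" by (simp add: real_sqrt_mult)
  have "integral {a..b} (\<lambda>x. (f x + g x)^2) = integral {a..b} (\<lambda>x. (f x)^2 + 2 * (f x * g x) + (g x)^2)"
    by (simp add: power2_eq_square algebra_simps)
  also have "\<dots> = A + 2*C + D" unfolding A_def C_def D_def
    using i1 i2 i3 by (simp add: integral_add integrable_add int_cmul integral_cmul_real)
  also have "\<dots> \<le> (sqrt A + sqrt D)^2" using C1 A0 D0 by (simp add: power2_eq_square algebra_simps)
  finally have "sqrt (integral {a..b} (\<lambda>x. (f x + g x)^2)) \<le> sqrt ((sqrt A + sqrt D)^2)"
    using real_sqrt_le_mono by blast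
  also have "\<dots> = sqrt A + sqrt D" using A0 D0 by simp
  finally show ?thesis unfolding A_def D_def .
qed

lemma holder4:
  fixes f h :: "real \<Rightarrow> real"
  assumes f: "continuous_on {a..b} f" and h: "continuous_on {a..b} h"
  shows "integral {a..b} (\<lambda>x. f x * (h x)^3) \<le> sqrt (sqrt (integral {a..b} (\<lambda>x. (f x)^4))) * (sqrt (sqrt (integral {a..b} (\<lambda>x. (h x)^4))))^3"
proof -
  define F4 where "F4 = integral {a..b} (\<lambda>x. (f x)^4)"
  define H4 where "H4 = integral {a..b} (\<lambda>x. (h x)^4)"
  define C1 where "C1 = integral {a..b} (\<lambda>x. f x * (h x)^3)"
  define E where "E = integral {a..b} (\<lambda>x. (f x)^2 * (h x)^2)"
  have F0: "F4 \<ge> 0" unfolding F4_def by (rule int_nonneg_cont) (auto intro!: continuous_intros f)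
  have H0: "H4 \<ge> 0" unfolding H4_def by (rule int_nonneg_cont) (auto intro!: continuous_intros h)
  have E0: "E \<ge> 0" unfolding E_def by (rule int_nonneg_cont) (auto intro!: continuous_intros f h)
  have "C1^2 \<le> integral {a..b} (\<lambda>x. (f x * h x)^2) * integral {a..b} (\<lambda>x. ((h x)^2)^2)"
    unfolding C1_def using cs_integral[of a b "\<lambda>x. f x * h x" "\<lambda>x. (h x)^2"] f h
    by (simp add: continuous_intros power2_eq_square power3_eq_cube mult.assoc)
  hence c1: "C1^2 \<le> E * H4" unfolding E_def H4_def by (simp add: power_mult_distrib flip: power_mult)
  have "E^2 \<le> integral {a..b} (\<lambda>x. ((f x)^2)^2) * integral {a..b} (\<lambda>x. ((h x)^2)^2)"
    unfolding E_def using cs_integral[of a b "\<lambda>x. (f x)^2" "\<lambda>x. (h x)^2"] f h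
    by (simp add: continuous_intros)
  hence "E^2 \<le> F4 * H4" unfolding F4_def H4_def by (simp flip: power_mult)
  hence "E \<le> sqrt (F4 * H4)" using E0 by (simp add: real_le_rsqrt)
  hence "C1^2 \<le> sqrt (F4*H4) * H4" using c1 H0 by (meson mult_right_mono order_trans)
  also have "\<dots> = (sqrt (sqrt F4) * (sqrt (sqrt H4))^3)^2"
  proof -
    have a: "(sqrt (sqrt F4))^2 = sqrt F4" using F0 by simp
    have b: "(sqrt (sqrt H4))^2 = sqrt H4" using H0 by simp
    have c: "(sqrt H4)^2 = H4" using H0 by simp
    have "(sqrt (sqrt F4) * (sqrt (sqrt H4))^3)^2 = (sqrt (sqrt F4))^2 * ((sqrt (sqrt H4))^2)^3"
      by (simp add: power_mult_distrib flip: power_mult)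
    also have "\<dots> = sqrt F4 * (sqrt H4 * (sqrt H4)^2)" unfolding a b by (simp add: power3_eq_cube power2_eq_square)
    also have "\<dots> = sqrt (F4*H4) * H4" unfolding c by (simp add: real_sqrt_mult)
    finally show ?thesis by simp
  qed
  finally have "C1^2 \<le> (sqrt (sqrt F4) * (sqrt (sqrt H4))^3)^2" .
  hence "C1 \<le> sqrt (sqrt F4) * (sqrt (sqrt H4))^3"
    by (rule power2_le_imp_le) (use F0 H0 in simp)
  thus ?thesis unfolding C1_def F4_def H4_def .
qed

lemma n4_tri:
  fixes f g :: "real \<Rightarrow> real"
  assumes f: "continuous_on {a..b} f" and g: "continuous_on {a..b} g"
  shows "sqrt (sqrt (integral {a..b} (\<lambda>x. (f x + g x)^4))) \<le> sqrt (sqrt (integral {a..b} (\<lambda>x. (f x)^4))) + sqrt (sqrt (integral {a..b} (\<lambda>x. (g x)^4)))"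
proof -
  define I where "I = integral {a..b} (\<lambda>x. (f x + g x)^4)"
  define X where "X = sqrt (sqrt I)"
  define rf where "rf = sqrt (sqrt (integral {a..b} (\<lambda>x. (f x)^4)))"
  define rg where "rg = sqrt (sqrt (integral {a..b} (\<lambda>x. (g x)^4)))"
  have fg: "continuous_on {a..b} (\<lambda>x. f x + g x)" by (intro continuous_intros f g)
  have I0: "I \<ge> 0" unfolding I_def by (rule int_nonneg_cont, intro continuous_intros f g) (simp add: zero_le_even_power)
  have X0: "X \<ge> 0" unfolding X_def using I0 by simp
  have rf0: "rf \<ge> 0" unfolding rf_def by (simp, rule int_nonneg_cont, intro continuous_intros f) (simp add: zero_le_even_power)
  have rg0: "rg \<ge> 0" unfolding rg_def by (simp, rule int_nonneg_cont, intro continuous_intros g) (simp add: zero_le_even_power)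
  have x2: "X^2 = sqrt I" unfolding X_def using I0 by simp
  have IX: "I = X^4" using x2 I0 by (metis power2_eq_square real_sqrt_pow2 power_mult mult_2 numeral_Bit0)
  have ia: "(\<lambda>x. f x * (f x + g x)^3) integrable_on {a..b}" by (intro integrable_continuous_real continuous_intros f g)
  have ib: "(\<lambda>x. g x * (f x + g x)^3) integrable_on {a..b}" by (intro integrable_continuous_real continuous_intros f g)
  have "I = integral {a..b} (\<lambda>x. f x * (f x + g x)^3 + g x * (f x + g x)^3)"
    unfolding I_def by (rule arg_cong[where f="integral {a..b}"]) (simp add: fun_eq_iff power_Suc algebra_simps eval_nat_numeral)
  also have "\<dots> = integral {a..b} (\<lambda>x. f x * (f x + g x)^3) + integral {a..b} (\<lambda>x. g x * (f x + g x)^3)"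
    using ia ib by (rule integral_add)
  also have "\<dots> \<le> rf * X^3 + rg * X^3"
    unfolding rf_def rg_def X_def I_def
    by (intro add_mono holder4 f g fg)
  finally have "X^4 \<le> (rf + rg) * X^3" using IX by (simp add: algebra_simps)
  hence "X \<le> rf + rg"
  proof (cases "X = 0")
    case False
    hence "X^3 > 0" using X0 by simp
    moreover assume "X^4 \<le> (rf + rg) * X^3"
    hence "X * X^3 \<le> (rf + rg) * X^3" by (simp add: eval_nat_numeral)
    ultimately show ?thesis by simp
  qed (use rf0 rg0 in simp)
  thus ?thesis unfolding X_def I_def rf_def rg_def .
qed

lemma ftc_real:
  fixes G g :: "real \<Rightarrow> real"
  assumes "a \<le> b" "\<And>x. x \<in> {a..b} \<Longrightarrow> (G has_real_derivative g x) (at x)"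
  shows "(g has_integral (G b - G a)) {a..b}"
  using assms
  by (intro fundamental_theorem_of_calculus)
     (auto simp: has_real_derivative_iff_has_vector_derivative[symmetric] intro: has_field_derivative_at_within)

lemma int_sin2_shift:
  fixes k Y :: real
  assumes k: "k > 0" and Y: "Y \<ge> 0"
  shows "integral {0..Y} (\<lambda>t. (sin (k*(Y-t)))^2) = Y/2 - sin (2*k*Y)/(4*k)"
proof -
  have "((\<lambda>t. (sin (k*(Y-t)))^2) has_integral ((Y/2 + sin(2*k*(Y-Y))/(4*k)) - (0/2 + sin(2*k*(Y-0))/(4*k)))) {0..Y}"
  proof (rule ftc_real[where G="\<lambda>t. t/2 + sin(2*k*(Y-t))/(4*k)"])
    fix t :: real
    have c2: "cos(2*k*(Y-t)) = 1 - 2*(sin(k*(Y-t)))^2" using cos_double_sin[of "k*(Y-t)"] by (simp add: mult.assoc)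
    have "((\<lambda>t. t/2 + sin(2*k*(Y-t))/(4*k)) has_real_derivative 1/2 - cos(2*k*(Y-t))/2) (at t)"
      using k by (auto intro!: derivative_eq_intros simp: field_simps)
    moreover have "1/2 - cos(2*k*(Y-t))/2 = (sin (k*(Y-t)))^2" using c2 by (simp add: field_simps)
    ultimately show "((\<lambda>t. t/2 + sin(2*k*(Y-t))/(4*k)) has_real_derivative (sin (k*(Y-t)))^2) (at t)"
      by simp
  qed (use Y in auto)
  thus ?thesis by (simp add: integral_unique)
qed

lemma int_S:
  fixes k B :: real
  assumes k: "k > 0" and B: "B \<ge> 0"
  shows "integral {0..B} (\<lambda>Y. Y/2 - sin (2*k*Y)/(4*k)) \<le> B^2/4"
proof -
  have "((\<lambda>Y. Y/2 - sin (2*k*Y)/(4*k)) has_integral ((B^2/4 + cos(2*k*B)/(8*k^2)) - (0^2/4 + cos(2*k*0)/(8*k^2)))) {0..B}"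
  proof (rule ftc_real[where G="\<lambda>Y. Y^2/4 + cos(2*k*Y)/(8*k^2)"])
    fix t :: real
    show "((\<lambda>Y. Y^2/4 + cos(2*k*Y)/(8*k^2)) has_real_derivative t/2 - sin (2*k*t)/(4*k)) (at t)"
      using k by (auto intro!: derivative_eq_intros simp: field_simps power2_eq_square)
  qed (use B in auto)
  hence "integral {0..B} (\<lambda>Y. Y/2 - sin (2*k*Y)/(4*k)) = B^2/4 + (cos(2*k*B) - 1)/(8*k^2)"
    by (simp add: integral_unique diff_divide_distrib)
  also have "\<dots> \<le> B^2/4" using k by (simp add: divide_nonpos_pos)
  finally show ?thesis .
qed

lemma T_deriv:
  fixes k t :: real assumes k: "k > 0"
  defines "al \<equiv> 1/(8*k^2)" and "be \<equiv> 1/(16*k^3)" and "ga \<equiv> 1/(32*k^2)" and "de \<equiv> 1/(128*k^3)"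
  shows "((\<lambda>Y. Y^3/12 + al*(Y*cos(2*k*Y)) - be* sin(2*k*Y) + ga*Y - de* sin(4*k*Y)) has_real_derivative
     t^2/4 - t * sin(2*k*t)/(4*k) + ga - ga*cos(4*k*t)) (at t)"
proof -
  have r1: "al = be*(2*k)" unfolding al_def be_def using k by (simp add: field_simps power2_eq_square power3_eq_cube)
  have r2: "al*(2*k) = 1/(4*k)" unfolding al_def using k by (simp add: field_simps power2_eq_square)
  have r3: "de*(4*k) = ga" unfolding de_def ga_def using k by (simp add: field_simps power2_eq_square power3_eq_cube)
  have "((\<lambda>Y. Y^3/12 + al*(Y*cos(2*k*Y)) - be* sin(2*k*Y) + ga*Y - de* sin(4*k*Y)) has_real_derivative
     3*t^2/12 + al*(1*cos(2*k*t) + t*(-sin(2*k*t)*(2*k))) - be*(cos(2*k*t)*(2*k)) + ga - de*(cos(4*k*t)*(4*k))) (at t)"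
    by (rule derivative_eq_intros refl | simp)+
  note d = this
  have eq: "3*t^2/12 + al*(1*cos(2*k*t) + t*(-sin(2*k*t)*(2*k))) - be*(cos(2*k*t)*(2*k)) + ga - de*(cos(4*k*t)*(4*k))
     = t^2/4 - t * sin(2*k*t)/(4*k) + ga - ga*cos(4*k*t)"
  proof -
    have "3*t^2/12 + al*(1*cos(2*k*t) + t*(-sin(2*k*t)*(2*k))) - be*(cos(2*k*t)*(2*k)) + ga - de*(cos(4*k*t)*(4*k))
       = t^2/4 + (al - be*(2*k))*cos(2*k*t) - (al*(2*k))*t* sin(2*k*t) + ga - (de*(4*k))*cos(4*k*t)"
      by (simp add: algebra_simps)
    also have "\<dots> = t^2/4 - t * sin(2*k*t)/(4*k) + ga - ga*cos(4*k*t)" unfolding r2 r3 using r1 by simp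
    finally show ?thesis .
  qed
  show ?thesis using d unfolding eq .
qed

lemma int_S2:
  fixes k B :: real
  assumes k: "k > 0" and B: "B \<ge> 0"
  shows "integral {0..B} (\<lambda>Y. (Y/2 - sin (2*k*Y)/(4*k))^2) \<le> B^3/12 + 5*B/(32*k^2) + 5/(32*k^3)"
proof -
  define al where "al = 1/(8*k^2)"
  define be where "be = 1/(16*k^3)"
  define ga where "ga = 1/(32*k^2)"
  define de where "de = 1/(128*k^3)"
  define T where "T = (\<lambda>Y::real. Y^3/12 + al*(Y*cos(2*k*Y)) - be * sin(2*k*Y) + ga*Y - de * sin(4*k*Y))"
  have "((\<lambda>Y. (Y/2 - sin (2*k*Y)/(4*k))^2) has_integral (T B - T 0)) {0..B}"
  proof (rule ftc_real)
    fix t :: real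
    have c2: "cos(4*k*t) = 1 - 2*(sin(2*k*t))^2" using cos_double_sin[of "2*k*t"] by (simp add: mult.assoc)
    have d: "(T has_real_derivative t^2/4 - t * sin(2*k*t)/(4*k) + ga - ga*cos(4*k*t)) (at t)"
      unfolding T_def al_def be_def ga_def de_def using T_deriv[OF k] by simp
    have e1: "(t/2 - sin (2*k*t)/(4*k))^2 = t^2/4 - t * sin(2*k*t)/(4*k) + (sin(2*k*t))^2/(16*k^2)"
      using k by (simp add: power2_eq_square field_simps)
    have e2: "(sin(2*k*t))^2 = (1 - cos(4*k*t))/2" using c2 by simp
    have e3: "(1 - cos(4*k*t))/2/(16*k^2) = ga - ga*cos(4*k*t)"
      unfolding ga_def using k by (simp add: field_simps)
    have "(t/2 - sin (2*k*t)/(4*k))^2 = t^2/4 - t * sin(2*k*t)/(4*k) + ga - ga*cos(4*k*t)"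
      unfolding e1 e2 e3 by simp
    with d show "(T has_real_derivative (t/2 - sin (2*k*t)/(4*k))^2) (at t)"
      by simp
  qed (use B in auto)
  hence "integral {0..B} (\<lambda>Y. (Y/2 - sin (2*k*Y)/(4*k))^2) = T B" by (simp add: integral_unique T_def)
  also have "T B \<le> B^3/12 + al*B + be + ga*B + de"
  proof -
    have "al*(B*cos(2*k*B)) \<le> al*B" unfolding al_def using k B
      by (intro mult_left_mono) (auto simp: mult_left_le)
    moreover have "be * (- sin(2*k*B)) \<le> be * 1" unfolding be_def using k
      by (intro mult_left_mono) (auto simp: minus_le_iff)
    moreover have "de * (- sin(4*k*B)) \<le> de * 1" unfolding de_def using k
      by (intro mult_left_mono) (auto simp: minus_le_iff)
    ultimately show ?thesis unfolding T_def by (simp add: algebra_simps)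
  qed
  also have "\<dots> \<le> B^3/12 + 5*B/(32*k^2) + 5/(32*k^3)" using k B unfolding al_def be_def ga_def de_def
    by (simp add: field_simps)
  finally show ?thesis .
qed

lemma perturb:
  fixes u Qt :: "real \<Rightarrow> real" and B k c M :: real
  assumes B: "B > 0" and k: "k > 0"
    and uc: "continuous_on {0..B} u" and Qc: "continuous_on {0..B} Qt"
    and rep: "\<And>Y. Y \<in> {0..B} \<Longrightarrow> u Y = c * sin (k*Y) + integral {0..Y} (\<lambda>t. sin (k*(Y-t)) * (Qt t * u t)) / k"
    and gM: "\<And>t. t \<in> {0..B} \<Longrightarrow> (Qt t * u t)^2 \<le> M^2 * (u t)^2"
  shows "integral {0..B} (\<lambda>Y. (u Y - c * sin (k*Y))^2) \<le> (B*M/(2*k))^2 * integral {0..B} (\<lambda>Y. (u Y)^2)"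
    and "integral {0..B} (\<lambda>Y. (u Y - c * sin (k*Y))^4) \<le> (B^3/12 + 5*B/(32*k^2) + 5/(32*k^3)) * integral {0..B} (\<lambda>Y. (Qt Y)^4) * integral {0..B} (\<lambda>Y. (u Y)^4) / k^4"
proof -
  define g where "g = (\<lambda>t. Qt t * u t)"
  define S where "S = (\<lambda>Y::real. Y/2 - sin (2*k*Y)/(4*k))"
  define G2 where "G2 = integral {0..B} (\<lambda>t. (g t)^2)"
  define R where "R = (\<lambda>Y. u Y - c * sin (k*Y))"
  have gc: "continuous_on {0..B} g" unfolding g_def by (intro continuous_intros uc Qc)
  have Rc: "continuous_on {0..B} R" unfolding R_def by (intro continuous_intros uc)
  have Sc: "continuous_on {0..B} S" unfolding S_def using k by (intro continuous_intros) auto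
  have G20: "G2 \<ge> 0" unfolding G2_def by (rule int_nonneg_cont) (auto intro!: continuous_intros gc)
  have S0: "S Y \<ge> 0" if "Y \<in> {0..B}" for Y
  proof -
    have "0 \<le> integral {0..Y} (\<lambda>t. (sin (k*(Y-t)))^2)" by (rule int_nonneg_cont) (auto intro!: continuous_intros)
    thus ?thesis unfolding S_def using int_sin2_shift[OF k, of Y] that by simp
  qed
  have pt: "(R Y)^2 \<le> S Y * G2 / k^2" if Y: "Y \<in> {0..B}" for Y
  proof -
    have sub: "{0..Y} \<subseteq> {0..B}" using Y by auto
    have gcY: "continuous_on {0..Y} g" using gc sub continuous_on_subset by blast
    have "(integral {0..Y} (\<lambda>t. sin (k*(Y-t)) * g t))^2 \<le> integral {0..Y} (\<lambda>t. (sin (k*(Y-t)))^2) * integral {0..Y} (\<lambda>t. (g t)^2)"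
      by (rule cs_integral) (auto intro!: continuous_intros gcY)
    also have "\<dots> = S Y * integral {0..Y} (\<lambda>t. (g t)^2)" unfolding S_def using int_sin2_shift[OF k, of Y] Y by simp
    also have "\<dots> \<le> S Y * G2" unfolding G2_def
      by (intro mult_left_mono S0 Y integral_subset_le sub integrable_continuous_real continuous_intros gc gcY) auto
    finally have "(integral {0..Y} (\<lambda>t. sin (k*(Y-t)) * g t))^2 \<le> S Y * G2" .
    moreover have "R Y = integral {0..Y} (\<lambda>t. sin (k*(Y-t)) * g t) / k" unfolding R_def g_def using rep[OF Y] by simp
    ultimately show ?thesis using k by (simp add: power_divide divide_right_mono)
  qed
  have G2M: "G2 \<le> M^2 * integral {0..B} (\<lambda>Y. (u Y)^2)"
  proof -
    have "G2 \<le> integral {0..B} (\<lambda>t. M^2 * (u t)^2)" unfolding G2_def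
      by (rule integral_le) (auto intro!: integrable_continuous_real continuous_intros gc uc Qc gM simp: g_def)
    thus ?thesis by (simp add: integral_cmul_real)
  qed
  have "integral {0..B} (\<lambda>Y. (R Y)^2) \<le> integral {0..B} (\<lambda>Y. S Y * G2 / k^2)"
    using k by (intro integral_le integrable_continuous_real continuous_intros Rc Sc pt) auto
  also have "\<dots> = G2 / k^2 * integral {0..B} S"
    using integral_cmul_real[of "{0..B}" "G2/k^2" S] by (simp add: mult.commute)
  also have "\<dots> \<le> G2 / k^2 * (B^2/4)" unfolding S_def
    by (intro mult_left_mono int_S k) (use B G20 in auto)
  also have "\<dots> \<le> M^2 * integral {0..B} (\<lambda>Y. (u Y)^2) / k^2 * (B^2/4)"
    using G2M by (intro mult_right_mono divide_right_mono) auto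
  also have "\<dots> = (B*M/(2*k))^2 * integral {0..B} (\<lambda>Y. (u Y)^2)" by (simp add: power_mult_distrib power_divide mult_ac)
  finally show "integral {0..B} (\<lambda>Y. (u Y - c * sin (k*Y))^2) \<le> (B*M/(2*k))^2 * integral {0..B} (\<lambda>Y. (u Y)^2)"
    unfolding R_def .
  have G2sq: "G2^2 \<le> integral {0..B} (\<lambda>Y. (Qt Y)^4) * integral {0..B} (\<lambda>Y. (u Y)^4)"
  proof -
    have "G2 = integral {0..B} (\<lambda>t. (Qt t)^2 * (u t)^2)" unfolding G2_def g_def by (simp add: power_mult_distrib)
    hence "G2^2 \<le> integral {0..B} (\<lambda>t. ((Qt t)^2)^2) * integral {0..B} (\<lambda>t. ((u t)^2)^2)"
      using cs_integral[of 0 B "\<lambda>t. (Qt t)^2" "\<lambda>t. (u t)^2"] by (simp add: continuous_intros Qc uc)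
    thus ?thesis by (simp flip: power_mult)
  qed
  have pt4: "(R Y)^4 \<le> (S Y)^2 * G2^2 / k^4" if Y: "Y \<in> {0..B}" for Y
  proof -
    have "(R Y)^4 = ((R Y)^2)^2" by (simp flip: power_mult)
    also have "\<dots> \<le> (S Y * G2 / k^2)^2" by (rule power_mono[OF pt[OF Y]]) simp
    also have "\<dots> = (S Y)^2 * G2^2 / k^4" by (simp add: power_mult_distrib power_divide flip: power_mult)
    finally show ?thesis .
  qed
  have "integral {0..B} (\<lambda>Y. (R Y)^4) \<le> integral {0..B} (\<lambda>Y. (S Y)^2 * G2^2 / k^4)"
    using k by (intro integral_le integrable_continuous_real continuous_intros Rc Sc pt4) auto
  also have "\<dots> = G2^2 / k^4 * integral {0..B} (\<lambda>Y. (S Y)^2)"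
    using integral_cmul_real[of "{0..B}" "G2^2/k^4" "\<lambda>Y. (S Y)^2"] by (simp add: mult.commute)
  also have "\<dots> \<le> G2^2 / k^4 * (B^3/12 + 5*B/(32*k^2) + 5/(32*k^3))" unfolding S_def
    by (intro mult_left_mono int_S2 k) (use B in auto)
  also have "\<dots> \<le> integral {0..B} (\<lambda>Y. (Qt Y)^4) * integral {0..B} (\<lambda>Y. (u Y)^4) / k^4 * (B^3/12 + 5*B/(32*k^2) + 5/(32*k^3))"
    using G2sq k B by (intro mult_right_mono divide_right_mono) (auto intro!: add_nonneg_nonneg)
  finally show "integral {0..B} (\<lambda>Y. (u Y - c * sin (k*Y))^4) \<le> (B^3/12 + 5*B/(32*k^2) + 5/(32*k^3)) * integral {0..B} (\<lambda>Y. (Qt Y)^4) * integral {0..B} (\<lambda>Y. (u Y)^4) / k^4"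
    unfolding R_def by (simp add: mult_ac)
qed

lemma n2_scale: "sqrt (integral {a..b} (\<lambda>x. (c * f x)^2)) = \<bar>c\<bar> * sqrt (integral {a..b} (\<lambda>x. (f x)^2))"
  by (simp add: power_mult_distrib integral_cmul_real real_sqrt_mult)

lemma neg4: "(- y)^4 = (y::real)^4" by simp
lemma neg2: "(- y)^2 = (y::real)^2" by simp

lemma pow4_sq: "(y::real)^4 = (y^2)^2" by simp

lemma sqrt_pow4: "(x::real) \<ge> 0 \<Longrightarrow> (sqrt x)^4 = x^2"
  by (simp only: pow4_sq) simp

lemma sqrt2_pow4: "(x::real) \<ge> 0 \<Longrightarrow> (sqrt (sqrt x))^4 = x"
  by (simp only: pow4_sq) simp

lemma sqrt4_abs: "sqrt (sqrt ((c::real)^4)) = \<bar>c\<bar>"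
proof -
  have "c^4 = (c^2)^2" by simp
  hence "sqrt (c^4) = c^2" by (simp only: real_sqrt_abs) simp
  thus ?thesis by simp
qed

lemma n4_scale: "sqrt (sqrt (integral {a..b} (\<lambda>x. (c * f x)^4))) = \<bar>c\<bar> * sqrt (sqrt (integral {a..b} (\<lambda>x. (f x)^4)))"
proof -
  have "sqrt (sqrt (c^4)) = \<bar>c\<bar>"
  proof -
    have "c^4 = (c^2)^2" by simp
    hence "sqrt (c^4) = c^2" by (simp only: real_sqrt_abs) simp
    thus ?thesis by simp
  qed
  thus ?thesis by (simp add: power_mult_distrib integral_cmul_real real_sqrt_mult)
qed

lemma ratio_bounds:
  fixes u Ph :: "real \<Rightarrow> real" and a b c A B :: real
  assumes uc: "continuous_on {A..B} u" and Pc: "continuous_on {A..B} Ph"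
    and a0: "a \<ge> 0" and a1: "a < 1" and b0: "b \<ge> 0" and b1: "b < 1"
    and R2: "integral {A..B} (\<lambda>x. (u x - c * Ph x)^2) \<le> a^2 * integral {A..B} (\<lambda>x. (u x)^2)"
    and R4: "integral {A..B} (\<lambda>x. (u x - c * Ph x)^4) \<le> b^4 * integral {A..B} (\<lambda>x. (u x)^4)"
    and u2: "integral {A..B} (\<lambda>x. (u x)^2) > 0" and u4: "integral {A..B} (\<lambda>x. (u x)^4) > 0"
    and P2: "integral {A..B} (\<lambda>x. (Ph x)^2) > 0" and P4: "integral {A..B} (\<lambda>x. (Ph x)^4) > 0"
  shows "((1-b)/(1+a))^4 \<le> ((integral {A..B} (\<lambda>x. (u x)^2))^2 / integral {A..B} (\<lambda>x. (u x)^4))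
            / ((integral {A..B} (\<lambda>x. (Ph x)^2))^2 / integral {A..B} (\<lambda>x. (Ph x)^4))"
    and "((integral {A..B} (\<lambda>x. (u x)^2))^2 / integral {A..B} (\<lambda>x. (u x)^4))
            / ((integral {A..B} (\<lambda>x. (Ph x)^2))^2 / integral {A..B} (\<lambda>x. (Ph x)^4)) \<le> ((1+b)/(1-a))^4"
proof -
  define I2u where "I2u = integral {A..B} (\<lambda>x. (u x)^2)"
  define I4u where "I4u = integral {A..B} (\<lambda>x. (u x)^4)"
  define I2P where "I2P = integral {A..B} (\<lambda>x. (Ph x)^2)"
  define I4P where "I4P = integral {A..B} (\<lambda>x. (Ph x)^4)"
  define n2u where "n2u = sqrt I2u"
  define n4u where "n4u = sqrt (sqrt I4u)"
  define n2P where "n2P = sqrt I2P"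
  define n4P where "n4P = sqrt (sqrt I4P)"
  define n2R where "n2R = sqrt (integral {A..B} (\<lambda>x. (u x - c * Ph x)^2))"
  define n4R where "n4R = sqrt (sqrt (integral {A..B} (\<lambda>x. (u x - c * Ph x)^4)))"
  have Rc: "continuous_on {A..B} (\<lambda>x. u x - c * Ph x)" by (intro continuous_intros uc Pc)
  have n2u0: "n2u > 0" and n4u0: "n4u > 0" and n2P0: "n2P > 0" and n4P0: "n4P > 0"
    using u2 u4 P2 P4 unfolding n2u_def n4u_def n2P_def n4P_def I2u_def I4u_def I2P_def I4P_def by auto
  have "n2R \<le> sqrt (a^2 * I2u)" unfolding n2R_def I2u_def using R2 real_sqrt_le_mono by blast
  hence n2R: "n2R \<le> a * n2u" unfolding n2u_def using a0 by (simp add: real_sqrt_mult)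
  have "n4R \<le> sqrt (sqrt (b^4 * I4u))" unfolding n4R_def I4u_def using R4 real_sqrt_le_mono by blast
  moreover have "sqrt (sqrt (b^4 * I4u)) = b * n4u"
  proof -
    have "sqrt (sqrt (b^4)) = b" using sqrt4_abs[of b] b0 by simp
    thus ?thesis unfolding n4u_def by (simp add: real_sqrt_mult)
  qed
  ultimately have n4R: "n4R \<le> b * n4u" by simp
  have t2a: "n2u \<le> \<bar>c\<bar> * n2P + n2R"
    using n2_tri[OF _ Rc, of "\<lambda>x. c * Ph x"] Pc n2_scale[of A B c Ph]
    unfolding n2u_def n2P_def n2R_def I2u_def I2P_def by (simp add: continuous_intros)
  have t2b: "\<bar>c\<bar> * n2P \<le> n2u + n2R"
  proof -
    have "sqrt (integral {A..B} (\<lambda>x. (u x + - (u x - c * Ph x))^2)) \<le> n2u + sqrt (integral {A..B} (\<lambda>x. (- (u x - c * Ph x))^2))"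
      unfolding n2u_def I2u_def by (rule n2_tri) (intro continuous_intros uc Pc)+
    thus ?thesis using n2_scale[of A B c Ph] unfolding n2P_def I2P_def n2R_def by (simp only: neg2) simp
  qed
  have t4a: "n4u \<le> \<bar>c\<bar> * n4P + n4R"
    using n4_tri[OF _ Rc, of "\<lambda>x. c * Ph x"] Pc n4_scale[of A B c Ph]
    unfolding n4u_def n4P_def n4R_def I4u_def I4P_def by (simp add: continuous_intros)
  have t4b: "\<bar>c\<bar> * n4P \<le> n4u + n4R"
  proof -
    have "sqrt (sqrt (integral {A..B} (\<lambda>x. (u x + - (u x - c * Ph x))^4))) \<le> n4u + sqrt (sqrt (integral {A..B} (\<lambda>x. (- (u x - c * Ph x))^4)))"
      unfolding n4u_def I4u_def by (rule n4_tri) (intro continuous_intros uc Pc)+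
    thus ?thesis using n4_scale[of A B c Ph] unfolding n4P_def I4P_def n4R_def by (simp only: neg4) simp
  qed
  have L2: "(1-a) * n2u \<le> \<bar>c\<bar> * n2P" using t2a n2R by (simp add: algebra_simps)
  have U2: "\<bar>c\<bar> * n2P \<le> (1+a) * n2u" using t2b n2R by (simp add: algebra_simps)
  have L4: "(1-b) * n4u \<le> \<bar>c\<bar> * n4P" using t4a n4R by (simp add: algebra_simps)
  have U4: "\<bar>c\<bar> * n4P \<le> (1+b) * n4u" using t4b n4R by (simp add: algebra_simps)
  have c0: "\<bar>c\<bar> > 0"
  proof -
    have "(1-a) * n2u > 0" using a1 n2u0 by simp
    hence "\<bar>c\<bar> * n2P > 0" using L2 by linarith
    thus ?thesis using n2P0 by (simp add: zero_less_mult_iff)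
  qed
  define r where "r = (n2u / n2P) * (n4P / n4u)"
  have r_lo: "(1-b)/(1+a) \<le> r"
  proof -
    have nz: "n2P * n4u \<noteq> 0" using n2P0 n4u0 by simp
    have "(1-b)/(1+a) = ((1-b) * (n2P * n4u)) / ((1+a) * (n2P * n4u))" using nz by (rule mult_divide_mult_cancel_right[symmetric])
    also have "\<dots> = ((1-b) * n4u * n2P) / ((1+a) * n2P * n4u)" by (simp add: mult_ac)
    finally have "(1-b)/(1+a) = ((1-b) * n4u * n2P) / ((1+a) * n2P * n4u)" .
    also have "\<dots> \<le> (\<bar>c\<bar> * n4P * n2P) / ((1+a) * n2P * n4u)"
      using L4 n2P0 n4u0 a0 by (intro divide_right_mono mult_right_mono) auto
    also have "\<dots> \<le> ((1+a) * n2u * n4P) / ((1+a) * n2P * n4u)"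
      using U2 n4P0 n2P0 n4u0 a0 by (intro divide_right_mono) (auto simp: mult.commute mult.left_commute mult_right_mono)
    also have "\<dots> = r"
    proof -
      have "1 + a \<noteq> 0" using a0 by auto
      hence "((1+a) * n2u * n4P) / ((1+a) * n2P * n4u) = ((n2u * n4P) * (1+a)) / ((n2P * n4u) * (1+a))"
        by (simp add: mult_ac)
      also have "\<dots> = (n2u * n4P) / (n2P * n4u)" using \<open>1 + a \<noteq> 0\<close> by (rule mult_divide_mult_cancel_right)
      also have "\<dots> = r" unfolding r_def by simp
      finally show ?thesis .
    qed
    finally show ?thesis .
  qed
  have r_hi: "r \<le> (1+b)/(1-a)"
  proof -
    have "r = (n2u * n4P) / (n2P * n4u)" unfolding r_def by (simp add: field_simps)
    also have "\<dots> = ((1-a) * n2u * n4P) / ((1-a) * n2P * n4u)" using a1 by simp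
    also have "\<dots> \<le> (\<bar>c\<bar> * n2P * n4P) / ((1-a) * n2P * n4u)"
      using L2 n4P0 n2P0 n4u0 a1 by (intro divide_right_mono mult_right_mono) auto
    also have "\<dots> \<le> (n2P * ((1+b) * n4u)) / ((1-a) * n2P * n4u)"
      using U4 n4P0 n2P0 n4u0 a1 by (intro divide_right_mono) (auto simp: mult.commute mult.left_commute mult_left_mono)
    also have "\<dots> = (1+b)/(1-a)"
    proof -
      have "n2P * n4u \<noteq> 0" using n2P0 n4u0 by auto
      have "(n2P * ((1+b) * n4u)) / ((1-a) * n2P * n4u) = ((1+b) * (n2P * n4u)) / ((1-a) * (n2P * n4u))"
        by (simp add: mult_ac)
      also have "\<dots> = (1+b)/(1-a)" using \<open>n2P * n4u \<noteq> 0\<close> by (rule mult_divide_mult_cancel_right)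
      finally show ?thesis .
    qed
    finally show ?thesis .
  qed
  have r4: "r^4 = (I2u^2 / I4u) / (I2P^2 / I4P)"
  proof -
    have e2u: "n2u^4 = I2u^2" unfolding n2u_def using u2 I2u_def by (intro sqrt_pow4) simp
    have e2P: "n2P^4 = I2P^2" unfolding n2P_def using P2 I2P_def by (intro sqrt_pow4) simp
    have e4u: "n4u^4 = I4u" unfolding n4u_def using u4 I4u_def by (intro sqrt2_pow4) simp
    have e4P: "n4P^4 = I4P" unfolding n4P_def using P4 I4P_def by (intro sqrt2_pow4) simp
    show ?thesis unfolding r_def by (simp add: power_mult_distrib power_divide e2u e2P e4u e4P)
  qed
  have "((1-b)/(1+a))^4 \<le> r^4" using r_lo b1 a0 by (intro power_mono) auto
  thus "((1-b)/(1+a))^4 \<le> ((integral {A..B} (\<lambda>x. (u x)^2))^2 / integral {A..B} (\<lambda>x. (u x)^4))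
            / ((integral {A..B} (\<lambda>x. (Ph x)^2))^2 / integral {A..B} (\<lambda>x. (Ph x)^4))"
    using r4 unfolding I2u_def I4u_def I2P_def I4P_def by simp
  have "r \<ge> 0" unfolding r_def using n2u0 n2P0 n4u0 n4P0 by simp
  hence "r^4 \<le> ((1+b)/(1-a))^4" using r_hi by (intro power_mono) auto
  thus "((integral {A..B} (\<lambda>x. (u x)^2))^2 / integral {A..B} (\<lambda>x. (u x)^4))
            / ((integral {A..B} (\<lambda>x. (Ph x)^2))^2 / integral {A..B} (\<lambda>x. (Ph x)^4)) \<le> ((1+b)/(1-a))^4"
    using r4 unfolding I2u_def I4u_def I2P_def I4P_def by simp
qed

locale LT =
  fixes L lam :: real and p w p1 p2 w1 w2 q phi dphi ddphi :: "real \<Rightarrow> real"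
  assumes L_pos: "L > 0"
    and pd1: "\<And>x. x \<in> {0..L} \<Longrightarrow> (p has_real_derivative p1 x) (at x within {0..L})"
    and pd2: "\<And>x. x \<in> {0..L} \<Longrightarrow> (p1 has_real_derivative p2 x) (at x within {0..L})"
    and p2c: "continuous_on {0..L} p2"
    and wd1: "\<And>x. x \<in> {0..L} \<Longrightarrow> (w has_real_derivative w1 x) (at x within {0..L})"
    and wd2: "\<And>x. x \<in> {0..L} \<Longrightarrow> (w1 has_real_derivative w2 x) (at x within {0..L})"
    and w2c: "continuous_on {0..L} w2"
    and p_pos: "\<And>x. x \<in> {0..L} \<Longrightarrow> p x > 0"
    and w_pos: "\<And>x. x \<in> {0..L} \<Longrightarrow> w x > 0"
    and q_cont: "continuous_on {0..L} q"
    and lam_pos: "lam > 0"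
    and phi_cont: "continuous_on {0..L} phi"
    and phi_d1: "\<And>x. x \<in> {0<..<L} \<Longrightarrow> (phi has_real_derivative dphi x) (at x)"
    and phi_d2: "\<And>x. x \<in> {0<..<L} \<Longrightarrow> ((\<lambda>t. p t * dphi t) has_real_derivative ddphi x) (at x)"
    and phi_eq: "\<And>x. x \<in> {0<..<L} \<Longrightarrow> - ddphi x / w x + q x / w x * phi x = lam * phi x"
    and phi0: "phi 0 = 0" and phiL: "phi L = 0"
begin

lemma cont_of_deriv:
  assumes "\<And>x. x \<in> {0..L} \<Longrightarrow> (g has_real_derivative g' x) (at x within {0..L})"
  shows "continuous_on {0..L} g"
  unfolding continuous_on_eq_continuous_within using assms DERIV_continuous by blast

lemma pc: "continuous_on {0..L} p" by (rule cont_of_deriv[OF pd1])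
lemma p1c: "continuous_on {0..L} p1" by (rule cont_of_deriv[OF pd2])
lemma wc: "continuous_on {0..L} w" by (rule cont_of_deriv[OF wd1])
lemma w1c: "continuous_on {0..L} w1" by (rule cont_of_deriv[OF wd2])

lemma interior_at: "x \<in> {0<..<L} \<Longrightarrow> at x within {0..L} = at x"
  by (intro at_within_Icc_at) auto

definition e :: "real \<Rightarrow> real" where "e x = sqrt (w x / p x)"

lemma e_pos: "x \<in> {0..L} \<Longrightarrow> e x > 0"
  unfolding e_def using p_pos w_pos by simp

lemma ec: "continuous_on {0..L} e"
  unfolding e_def by (intro continuous_intros pc wc) (use p_pos in force)

definition yf :: "real \<Rightarrow> real" where "yf x = integral {0..x} e"

lemma yf_deriv: "x \<in> {0..L} \<Longrightarrow> (yf has_real_derivative e x) (at x within {0..L})"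
proof -
  assume x: "x \<in> {0..L}"
  have "yf = (\<lambda>u. integral {0..u} e)" by (rule ext) (simp add: yf_def)
  thus ?thesis using integral_has_vector_derivative[OF ec x]
    by (simp add: has_real_derivative_iff_has_vector_derivative)
qed

lemma yfc: "continuous_on {0..L} yf" by (rule cont_of_deriv[OF yf_deriv])

lemma yf0: "yf 0 = 0" unfolding yf_def by simp

lemma yf_less: assumes "0 \<le> x" "x < x'" "x' \<le> L" shows "yf x < yf x'"
proof (rule DERIV_pos_imp_increasing_open[of x x' yf])
  show "x < x'" by fact
  show "continuous_on {x..x'} yf" using yfc by (rule continuous_on_subset) (use assms in auto)
  fix t assume "x < t" "t < x'"
  hence t: "t \<in> {0<..<L}" using assms by auto
  show "\<exists>y. DERIV yf t :> y \<and> 0 < y"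
    using yf_deriv[of t] t e_pos[of t] interior_at[OF t] by auto
qed

lemma yf_le: assumes "0 \<le> x" "x \<le> x'" "x' \<le> L" shows "yf x \<le> yf x'"
  using yf_less[of x x'] assms by (cases "x = x'") auto

definition BB :: real where "BB = yf L"

lemma BB_pos: "BB > 0" unfolding BB_def using yf_less[of 0 L] L_pos yf0 by simp

lemma yf_inj: "inj_on yf {0..L}"
proof (rule inj_onI)
  fix x x' assume "x \<in> {0..L}" "x' \<in> {0..L}" "yf x = yf x'"
  thus "x = x'" using yf_less[of x x'] yf_less[of x' x] by (cases x x' rule: linorder_cases) auto
qed

lemma yf_image: "yf ` {0..L} = {0..BB}"
proof
  show "yf ` {0..L} \<subseteq> {0..BB}"
  proof
    fix y assume "y \<in> yf ` {0..L}"
    then obtain x where x: "x \<in> {0..L}" "y = yf x" by auto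
    have "yf 0 \<le> yf x" "yf x \<le> yf L" using x by (auto intro!: yf_le)
    thus "y \<in> {0..BB}" using x yf0 unfolding BB_def by auto
  qed
  show "{0..BB} \<subseteq> yf ` {0..L}"
  proof
    fix y assume "y \<in> {0..BB}"
    hence "yf 0 \<le> y" "y \<le> yf L" unfolding BB_def using yf0 by auto
    then obtain x where "0 \<le> x" "x \<le> L" "yf x = y" using IVT'[of yf 0 y L] yfc L_pos by auto
    thus "y \<in> yf ` {0..L}" by auto
  qed
qed

definition xf :: "real \<Rightarrow> real" where "xf = the_inv_into {0..L} yf"

lemma xf_yf: "x \<in> {0..L} \<Longrightarrow> xf (yf x) = x"
  unfolding xf_def by (rule the_inv_into_f_f[OF yf_inj])

lemma yf_xf: "y \<in> {0..BB} \<Longrightarrow> yf (xf y) = y"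
  unfolding xf_def by (rule f_the_inv_into_f[OF yf_inj]) (simp add: yf_image)

lemma xf_in: "y \<in> {0..BB} \<Longrightarrow> xf y \<in> {0..L}"
  unfolding xf_def by (rule the_inv_into_into[OF yf_inj]) (auto simp: yf_image)

lemma xf0: "xf 0 = 0" using xf_yf[of 0] yf0 L_pos by simp

lemma xfB: "xf BB = L" using xf_yf[of L] L_pos unfolding BB_def by simp

lemma xf_int: assumes "y \<in> {0<..<BB}" shows "xf y \<in> {0<..<L}"
proof -
  have y: "y \<in> {0..BB}" using assms by auto
  have "xf y \<noteq> 0" using yf_xf[OF y] yf0 assms by auto
  moreover have "xf y \<noteq> L" using yf_xf[OF y] assms unfolding BB_def by auto
  ultimately show ?thesis using xf_in[OF y] by auto
qed

lemma xfc: "continuous_on {0..BB} xf"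
proof -
  have "continuous_on (yf ` {0..L}) xf"
    by (rule continuous_on_inv[OF yfc]) (auto simp: xf_yf)
  thus ?thesis by (simp add: yf_image)
qed

lemma xf_deriv: assumes y: "y \<in> {0<..<BB}" shows "(xf has_real_derivative inverse (e (xf y))) (at y)"
proof (rule DERIV_inverse_function[where f=yf and a=0 and b=BB])
  have xi: "xf y \<in> {0<..<L}" by (rule xf_int[OF y])
  show "DERIV yf (xf y) :> e (xf y)" using yf_deriv[of "xf y"] xi interior_at[OF xi] by auto
  show "e (xf y) \<noteq> 0" using e_pos[of "xf y"] xi by auto
  show "0 < y" "y < BB" using y by auto
  show "yf (xf z) = z" if "0 < z" "z < BB" for z using yf_xf[of z] that by auto
  show "isCont xf y" using continuous_on_interior[OF xfc, of y] y by simp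
qed

end

context LT begin

definition m :: "real \<Rightarrow> real" where "m x = w x * p x"
definition m1 :: "real \<Rightarrow> real" where "m1 x = w x * p1 x + w1 x * p x"
definition m2 :: "real \<Rightarrow> real" where "m2 x = (w x * p2 x + w1 x * p1 x) + (w1 x * p1 x + w2 x * p x)"
definition F :: "real \<Rightarrow> real" where "F x = (w x * p x) powr (1/4)"
definition F1 :: "real \<Rightarrow> real" where "F1 x = 1/4 * (w x * p x) powr (1/4 - 1) * m1 x"
definition F2 :: "real \<Rightarrow> real" where
  "F2 x = 1/4 * (w x * p x) powr (1/4 - 1) * m2 x + 1/4 * ((1/4 - 1) * (w x * p x) powr (1/4 - 1 - 1) * m1 x) * m1 x"
definition s :: "real \<Rightarrow> real" where "s x = sqrt (p x / w x)"
definition s1 :: "real \<Rightarrow> real" where "s1 x = inverse (sqrt (p x / w x)) / 2 * ((p1 x * w x - p x * w1 x) / (w x * w x))"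
definition A :: "real \<Rightarrow> real" where "A x = F1 x * s x"
definition A1 :: "real \<Rightarrow> real" where "A1 x = F1 x * s1 x + F2 x * s x"

lemma m_pos: "x \<in> {0..L} \<Longrightarrow> w x * p x > 0" using p_pos w_pos by simp

lemma md: "x \<in> {0..L} \<Longrightarrow> ((\<lambda>x. w x * p x) has_real_derivative m1 x) (at x within {0..L})"
  unfolding m1_def by (rule DERIV_mult'[OF wd1 pd1])

lemma m1d: "x \<in> {0..L} \<Longrightarrow> (m1 has_real_derivative m2 x) (at x within {0..L})"
proof -
  assume x: "x \<in> {0..L}"
  have "((\<lambda>x. w x * p1 x + w1 x * p x) has_real_derivative (w x * p2 x + w1 x * p1 x) + (w1 x * p1 x + w2 x * p x)) (at x within {0..L})"
    by (rule DERIV_add[OF DERIV_mult'[OF wd1[OF x] pd2[OF x]] DERIV_mult'[OF wd2[OF x] pd1[OF x]]])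
  thus ?thesis unfolding m1_def[abs_def] m2_def .
qed

lemma powd: "x \<in> {0..L} \<Longrightarrow> ((\<lambda>x. (w x * p x) powr r) has_real_derivative (r * (w x * p x) powr (r - 1)) * m1 x) (at x within {0..L})"
  using DERIV_chain2[OF has_real_derivative_powr[OF m_pos] md] by simp

lemma Fd: "x \<in> {0..L} \<Longrightarrow> (F has_real_derivative F1 x) (at x within {0..L})"
  unfolding F_def[abs_def] F1_def using powd[of x "1/4"] by (simp add: mult.assoc)

lemma F1d: "x \<in> {0..L} \<Longrightarrow> (F1 has_real_derivative F2 x) (at x within {0..L})"
proof -
  assume x: "x \<in> {0..L}"
  have "((\<lambda>x. 1/4 * (w x * p x) powr (1/4 - 1) * m1 x) has_real_derivative
     1/4 * (w x * p x) powr (1/4 - 1) * m2 x + 1/4 * (((1/4 - 1) * (w x * p x) powr (1/4 - 1 - 1)) * m1 x) * m1 x) (at x within {0..L})"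
    by (rule DERIV_mult'[OF DERIV_cmult[OF powd[OF x]] m1d[OF x]])
  thus ?thesis unfolding F1_def[abs_def] F2_def by (simp add: mult.assoc)
qed

lemma sd: "x \<in> {0..L} \<Longrightarrow> (s has_real_derivative s1 x) (at x within {0..L})"
proof -
  assume x: "x \<in> {0..L}"
  have pos: "p x / w x > 0" using p_pos[OF x] w_pos[OF x] by simp
  have "((\<lambda>x. sqrt (p x / w x)) has_real_derivative (inverse (sqrt (p x / w x)) / 2) * ((p1 x * w x - p x * w1 x) / (w x * w x))) (at x within {0..L})"
    by (rule DERIV_chain2[OF DERIV_real_sqrt[OF pos] DERIV_divide[OF pd1[OF x] wd1[OF x]]]) (use w_pos[OF x] in simp)
  thus ?thesis unfolding s_def[abs_def] s1_def .
qed

lemma Ad: "x \<in> {0..L} \<Longrightarrow> (A has_real_derivative A1 x) (at x within {0..L})"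
  unfolding A_def[abs_def] A1_def by (rule DERIV_mult'[OF F1d sd])

lemma F_pos: "x \<in> {0..L} \<Longrightarrow> F x > 0" unfolding F_def using p_pos[of x] w_pos[of x] by simp
lemma s_pos: "x \<in> {0..L} \<Longrightarrow> s x > 0" unfolding s_def using p_pos w_pos by simp

lemma Fc: "continuous_on {0..L} F" by (rule cont_of_deriv[OF Fd])
lemma F1c: "continuous_on {0..L} F1" by (rule cont_of_deriv[OF F1d])
lemma sc: "continuous_on {0..L} s" by (rule cont_of_deriv[OF sd])
lemma Ac: "continuous_on {0..L} A" by (rule cont_of_deriv[OF Ad])

lemma m1c: "continuous_on {0..L} m1" by (rule cont_of_deriv[OF m1d])
lemma m2c: "continuous_on {0..L} m2" unfolding m2_def[abs_def] by (intro continuous_intros pc p1c p2c wc w1c w2c)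

lemma mc: "continuous_on {0..L} (\<lambda>x. w x * p x)" by (intro continuous_intros wc pc)

lemma powc: "continuous_on {0..L} (\<lambda>x. (w x * p x) powr r)"
  by (rule continuous_on_powr[OF mc continuous_on_const]) (use m_pos in force)

lemma F2c: "continuous_on {0..L} F2"
  unfolding F2_def[abs_def] by (intro continuous_intros powc m1c m2c)

lemma s1c: "continuous_on {0..L} s1"
proof -
  have c1: "continuous_on {0..L} (\<lambda>x. inverse (s x))"
    by (rule continuous_on_inverse[OF sc]) (use s_pos in force)
  have c2: "continuous_on {0..L} (\<lambda>x. (p1 x * w x - p x * w1 x) / (w x * w x))"
    by (rule continuous_on_divide) (intro continuous_intros p1c wc pc w1c, intro continuous_intros wc, use w_pos in force)
  have "s1 = (\<lambda>x. inverse (s x) / 2 * ((p1 x * w x - p x * w1 x) / (w x * w x)))"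
    by (rule ext) (simp add: s1_def s_def)
  moreover have c3: "continuous_on {0..L} (\<lambda>x. inverse (s x) / 2)"
    by (rule continuous_on_divide[OF c1 continuous_on_const]) simp
  ultimately show ?thesis using continuous_on_mult[OF c3 c2] by (simp only:)
qed

lemma A1c: "continuous_on {0..L} A1"
  unfolding A1_def[abs_def] by (intro continuous_intros F1c s1c F2c sc)

definition Qx :: "real \<Rightarrow> real" where "Qx x = A1 x / (e x * F x) + q x / w x"

lemma Qxc: "continuous_on {0..L} Qx"
proof -
  have c1: "continuous_on {0..L} (\<lambda>x. A1 x / (e x * F x))"
    by (rule continuous_on_divide) (intro A1c, intro continuous_intros ec Fc, use e_pos F_pos in force)
  have c2: "continuous_on {0..L} (\<lambda>x. q x / w x)"
    by (rule continuous_on_divide) (intro q_cont, intro wc, use w_pos in force)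
  show ?thesis unfolding Qx_def[abs_def] by (rule continuous_on_add[OF c1 c2])
qed

lemma Fsq: assumes x: "x \<in> {0..L}" shows "(F x)^2 = sqrt (w x * p x)"
proof -
  have "(F x)^2 = (w x * p x) powr (1/4) * (w x * p x) powr (1/4)" unfolding F_def by (simp add: power2_eq_square)
  also have "\<dots> = (w x * p x) powr (1/2)" by (simp flip: powr_add)
  also have "\<dots> = sqrt (w x * p x)" using m_pos[OF x] by (simp add: powr_half_sqrt)
  finally show ?thesis .
qed

lemma F4: assumes x: "x \<in> {0..L}" shows "(F x)^4 = w x * p x"
proof -
  have "(F x)^4 = ((F x)^2)^2" by simp
  thus ?thesis using Fsq[OF x] m_pos[OF x] by simp
qed

lemma ep: assumes x: "x \<in> {0..L}" shows "e x * p x = (F x)^2"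
proof -
  have "p x = sqrt (p x * p x)" using p_pos[OF x] by simp
  hence "e x * p x = sqrt (w x / p x) * sqrt (p x * p x)" unfolding e_def by simp
  also have "\<dots> = sqrt (w x / p x * (p x * p x))" by (rule real_sqrt_mult[symmetric])
  also have "w x / p x * (p x * p x) = w x * p x" using p_pos[OF x] by (simp add: field_simps)
  finally show ?thesis using Fsq[OF x] by simp
qed

lemma eF: assumes x: "x \<in> {0..L}" shows "e x * (F x)^2 = w x"
proof -
  have "e x * (F x)^2 = sqrt (w x / p x) * sqrt (w x * p x)" unfolding e_def Fsq[OF x] by simp
  also have "\<dots> = sqrt (w x / p x * (w x * p x))" by (rule real_sqrt_mult[symmetric])
  also have "w x / p x * (w x * p x) = (w x)^2" using p_pos[OF x] by (simp add: power2_eq_square)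
  finally show ?thesis using w_pos[OF x] by simp
qed

lemma se: assumes x: "x \<in> {0..L}" shows "s x = inverse (e x)"
  unfolding s_def e_def by (simp add: real_sqrt_inverse[symmetric] inverse_divide)

end

lemma G_alg:
  fixes E Fv F1v Av A1v ph Pv qv lamv k sn cs W P dph gv :: real
  assumes E: "E > 0" and Fv: "Fv > 0" and W: "W = E * Fv^2" and P: "P * E = Fv^2" and k: "k^2 = lamv"
    and dph: "dph = Pv / P" and gv: "gv = (qv - lamv * W) * ph" and Av: "Av = F1v * inverse E"
  shows "((Av * ph + Pv / Fv) * (cs * (k * (0 - E))) + ((Av * dph + A1v * ph) + (gv * Fv - Pv * F1v) / (Fv * Fv)) * sn)
       + ((k * (Fv * ph)) * (- sn * (k * (0 - E))) + (k * (Fv * dph + F1v * ph)) * cs)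
       = sn * E * (A1v / (E * Fv) + qv / W) * (Fv * ph)"
proof -
  have P': "P = Fv^2 / E" using P E by (simp add: field_simps)
  show ?thesis unfolding dph gv P' W Av k[symmetric] using E Fv
    by (simp add: field_simps power2_eq_square)
qed

context LT begin

lemma at_int: "x \<in> {0<..<L} \<Longrightarrow> (g has_real_derivative D) (at x within {0..L}) \<Longrightarrow> (g has_real_derivative D) (at x)"
  using interior_at by simp

lemma int_sub: "x \<in> {0<..<L} \<Longrightarrow> x \<in> {0..L}" by auto

lemma F_at: "x \<in> {0<..<L} \<Longrightarrow> (F has_real_derivative F1 x) (at x)"
  by (rule at_int) (auto intro: Fd)
lemma A_at: "x \<in> {0<..<L} \<Longrightarrow> (A has_real_derivative A1 x) (at x)"
  by (rule at_int) (auto intro: Ad)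
lemma yf_at: "x \<in> {0<..<L} \<Longrightarrow> (yf has_real_derivative e x) (at x)"
  by (rule at_int) (auto intro: yf_deriv)

definition ff :: "real \<Rightarrow> real" where "ff y = F (xf y)"

lemma A_alt: "x \<in> {0..L} \<Longrightarrow> A x = F1 x * inverse (e x)"
  unfolding A_def using se by simp

lemma ff_d: assumes y: "y \<in> {0<..<BB}" shows "(ff has_real_derivative A (xf y)) (at y)"
proof -
  have "((\<lambda>y. F (xf y)) has_real_derivative F1 (xf y) * inverse (e (xf y))) (at y)"
    by (rule DERIV_chain2[OF F_at[OF xf_int[OF y]] xf_deriv[OF y]])
  thus ?thesis unfolding ff_def[abs_def] using A_alt[of "xf y"] xf_int[OF y] by auto
qed

lemma deriv_ff: "y \<in> {0<..<BB} \<Longrightarrow> deriv ff y = A (xf y)"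
  by (rule DERIV_imp_deriv[OF ff_d])

lemma dd_ff: assumes y: "y \<in> {0<..<BB}" shows "deriv (deriv ff) y = A1 (xf y) * inverse (e (xf y))"
proof -
  have "((\<lambda>y. A (xf y)) has_real_derivative A1 (xf y) * inverse (e (xf y))) (at y)"
    by (rule DERIV_chain2[OF A_at[OF xf_int[OF y]] xf_deriv[OF y]])
  hence "(deriv ff has_real_derivative A1 (xf y) * inverse (e (xf y))) (at y)"
    by (rule has_field_derivative_transform_within_open[where S="{0<..<BB}"]) (use y deriv_ff in auto)
  thus ?thesis by (rule DERIV_imp_deriv)
qed

lemma Q_eq: assumes y: "y \<in> {0<..<BB}"
  shows "deriv (deriv ff) y / ff y + q (xf y) / w (xf y) = Qx (xf y)"
  unfolding dd_ff[OF y] Qx_def ff_def by (simp add: divide_inverse mult_ac)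

definition gg :: "real \<Rightarrow> real" where "gg x = (q x - lam * w x) * phi x"

lemma ggc: "continuous_on {0..L} gg" unfolding gg_def[abs_def] by (intro continuous_intros q_cont wc phi_cont)

definition c0 :: real where "c0 = L / 2"
definition Pc :: real where "Pc = p c0 * dphi c0 - integral {0..c0} gg"
definition Pt :: "real \<Rightarrow> real" where "Pt x = Pc + integral {0..x} gg"

lemma Ptc: "continuous_on {0..L} Pt"
  unfolding Pt_def[abs_def] by (intro continuous_intros indefinite_integral_continuous_1 integrable_continuous_real ggc)

lemma Pt_at: assumes x: "x \<in> {0<..<L}" shows "(Pt has_real_derivative gg x) (at x)"
proof -
  have "((\<lambda>u. integral {0..u} gg) has_real_derivative gg x) (at x within {0..L})"
    using integral_has_vector_derivative[OF ggc, of x] x by (simp add: has_real_derivative_iff_has_vector_derivative)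
  hence "((\<lambda>u. integral {0..u} gg) has_real_derivative gg x) (at x)" using at_int[OF x] by blast
  hence "((\<lambda>u. Pc + integral {0..u} gg) has_real_derivative 0 + gg x) (at x)" by (rule DERIV_add[OF DERIV_const])
  thus ?thesis unfolding Pt_def[abs_def] by simp
qed

lemma ddphi_eq: assumes x: "x \<in> {0<..<L}" shows "ddphi x = gg x"
proof -
  have w0: "w x > 0" using w_pos x by auto
  have "- ddphi x / w x + q x / w x * phi x = lam * phi x" by (rule phi_eq[OF x])
  hence "- ddphi x + q x * phi x = lam * w x * phi x" using w0 by (simp add: field_simps)
  thus ?thesis unfolding gg_def by (simp add: algebra_simps)
qed

lemma P_eq: assumes x: "x \<in> {0<..<L}" shows "p x * dphi x = Pt x"
proof -
  define D where "D = (\<lambda>z. p z * dphi z - Pt z)"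
  have "\<exists>C. \<forall>z\<in>{0<..<L}. D z = C"
  proof (rule has_field_derivative_zero_constant)
    show "convex {0<..<L}" by simp
    fix z assume z: "z \<in> {0<..<L}"
    have "(D has_real_derivative ddphi z - gg z) (at z)"
      unfolding D_def by (rule DERIV_diff[OF phi_d2[OF z] Pt_at[OF z]])
    hence "(D has_real_derivative 0) (at z)" using ddphi_eq[OF z] by simp
    thus "(D has_real_derivative 0) (at z within {0<..<L})" by (rule has_field_derivative_at_within)
  qed
  then obtain C where C: "\<forall>z\<in>{0<..<L}. D z = C" by blast
  have c0i: "c0 \<in> {0<..<L}" unfolding c0_def using L_pos by auto
  have "D c0 = 0" unfolding D_def Pt_def Pc_def by simp
  hence "C = 0" using C c0i by auto
  thus ?thesis using C x unfolding D_def by auto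
qed

lemma dphi_eq: "x \<in> {0<..<L} \<Longrightarrow> dphi x = Pt x / p x"
  using P_eq[of x] p_pos[of x] by (auto simp: field_simps)

definition V :: "real \<Rightarrow> real" where "V x = A x * phi x + Pt x / F x"

definition kk :: real where "kk = sqrt lam"

lemma kk_pos: "kk > 0" unfolding kk_def using lam_pos by simp
lemma kk_sq: "kk^2 = lam" unfolding kk_def using lam_pos by simp

lemma G_deriv:
  assumes x: "x \<in> {0<..<L}"
  shows "((\<lambda>x. (A x * phi x + Pt x / F x) * sin (kk * (Y - yf x)) + (kk * (F x * phi x)) * cos (kk * (Y - yf x)))
          has_real_derivative sin (kk * (Y - yf x)) * e x * Qx x * (F x * phi x)) (at x)"
proof -
  have xi: "x \<in> {0..L}" using x by auto
  have Fne: "F x \<noteq> 0" using F_pos[OF xi] by simp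
  have dV: "((\<lambda>x. A x * phi x + Pt x / F x) has_real_derivative (A x * dphi x + A1 x * phi x) + (gg x * F x - Pt x * F1 x) / (F x * F x)) (at x)"
    by (rule DERIV_add[OF DERIV_mult'[OF A_at[OF x] phi_d1[OF x]] DERIV_divide[OF Pt_at[OF x] F_at[OF x] Fne]])
  have dk: "((\<lambda>x. kk * (Y - yf x)) has_real_derivative kk * (0 - e x)) (at x)"
    by (rule DERIV_cmult[OF DERIV_diff[OF DERIV_const yf_at[OF x]]])
  have dsin: "((\<lambda>x. sin (kk * (Y - yf x))) has_real_derivative cos (kk * (Y - yf x)) * (kk * (0 - e x))) (at x)"
    by (rule DERIV_chain2[OF DERIV_sin dk])
  have dcos: "((\<lambda>x. cos (kk * (Y - yf x))) has_real_derivative - sin (kk * (Y - yf x)) * (kk * (0 - e x))) (at x)"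
    by (rule DERIV_chain2[OF DERIV_cos dk])
  have dkU: "((\<lambda>x. kk * (F x * phi x)) has_real_derivative kk * (F x * dphi x + F1 x * phi x)) (at x)"
    by (rule DERIV_cmult[OF DERIV_mult'[OF F_at[OF x] phi_d1[OF x]]])
  have dG: "((\<lambda>x. (A x * phi x + Pt x / F x) * sin (kk * (Y - yf x)) + (kk * (F x * phi x)) * cos (kk * (Y - yf x)))
          has_real_derivative
          ((A x * phi x + Pt x / F x) * (cos (kk * (Y - yf x)) * (kk * (0 - e x))) + ((A x * dphi x + A1 x * phi x) + (gg x * F x - Pt x * F1 x) / (F x * F x)) * sin (kk * (Y - yf x)))
          + ((kk * (F x * phi x)) * (- sin (kk * (Y - yf x)) * (kk * (0 - e x))) + (kk * (F x * dphi x + F1 x * phi x)) * cos (kk * (Y - yf x)))) (at x)"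
    by (rule DERIV_add[OF DERIV_mult'[OF dV dsin] DERIV_mult'[OF dkU dcos]])
  have eq: "((A x * phi x + Pt x / F x) * (cos (kk * (Y - yf x)) * (kk * (0 - e x))) + ((A x * dphi x + A1 x * phi x) + (gg x * F x - Pt x * F1 x) / (F x * F x)) * sin (kk * (Y - yf x)))
          + ((kk * (F x * phi x)) * (- sin (kk * (Y - yf x)) * (kk * (0 - e x))) + (kk * (F x * dphi x + F1 x * phi x)) * cos (kk * (Y - yf x)))
          = sin (kk * (Y - yf x)) * e x * (A1 x / (e x * F x) + q x / w x) * (F x * phi x)"
  proof (rule G_alg)
    show "e x > 0" by (rule e_pos[OF xi])
    show "F x > 0" by (rule F_pos[OF xi])
    show "w x = e x * (F x)^2" using eF[OF xi] by simp
    show "p x * e x = (F x)^2" using ep[OF xi] by (simp add: mult.commute)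
    show "kk^2 = lam" by (rule kk_sq)
    show "dphi x = Pt x / p x" by (rule dphi_eq[OF x])
    show "gg x = (q x - lam * w x) * phi x" by (rule gg_def)
    show "A x = F1 x * inverse (e x)" by (rule A_alt[OF xi])
  qed
  show ?thesis using dG unfolding eq Qx_def .
qed

end

context LT begin

lemma subst_gen:
  assumes h: "continuous_on {0..BB} h" and X: "X \<in> {0..L}"
  shows "((\<lambda>x. e x * h (yf x)) has_integral integral {0..yf X} h) {0..X}"
proof -
  have sub: "{0..X} \<subseteq> {0..L}" using X by auto
  have "((\<lambda>x. e x *\<^sub>R h (yf x)) has_integral (integral {yf 0..yf X} h - integral {yf X..yf 0} h)) {0..X}"
  proof (rule has_integral_substitution_general[where s="{}" and c=0 and d=BB])
    show "yf ` {0..X} \<subseteq> {0..BB}" using sub yf_image by auto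
    show "continuous_on {0..X} yf" using yfc sub by (rule continuous_on_subset)
    fix x assume "x \<in> {0..X} - {}"
    hence "x \<in> {0..L}" using sub by auto
    thus "(yf has_real_derivative e x) (at x within {0..X})" using yf_deriv sub by (blast intro: DERIV_subset)
  qed (use X h in auto)
  moreover have "integral {yf X..yf 0} h = 0"
  proof (cases "yf X = 0")
    case True thus ?thesis using yf0 by simp
  next
    case False
    hence "yf X > 0" using yf_le[of 0 X] X yf0 by auto
    thus ?thesis using yf0 by simp
  qed
  ultimately show ?thesis using yf0 by simp
qed

lemma subst_full:
  assumes h: "continuous_on {0..BB} h"
  shows "integral {0..L} (\<lambda>x. e x * h (yf x)) = integral {0..BB} h"
  using subst_gen[OF h, of L] L_pos unfolding BB_def by (auto intro: integral_unique)

definition uu :: "real \<Rightarrow> real" where "uu t = F (xf t) * phi (xf t)"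

lemma comp_c: "continuous_on {0..L} g \<Longrightarrow> continuous_on {0..BB} (\<lambda>t. g (xf t))"
  by (rule continuous_on_compose2[OF _ xfc]) (use xf_in in auto)

lemma uuc: "continuous_on {0..BB} uu"
  unfolding uu_def[abs_def] by (intro continuous_intros comp_c Fc phi_cont)

lemma Qtc: "continuous_on {0..BB} (\<lambda>t. Qx (xf t))" by (rule comp_c[OF Qxc])

lemma uu_yf: "x \<in> {0..L} \<Longrightarrow> uu (yf x) = F x * phi x"
  unfolding uu_def using xf_yf by simp

lemma uu0: "uu 0 = 0" unfolding uu_def xf0 phi0 by simp
lemma uuB: "uu BB = 0" unfolding uu_def xfB phiL by simp

lemma rep:
  assumes Y: "Y \<in> {0..BB}"
  shows "uu Y = (V 0 / kk) * sin (kk*Y) + integral {0..Y} (\<lambda>t. sin (kk*(Y-t)) * (Qx (xf t) * uu t)) / kk"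
proof -
  define X where "X = xf Y"
  have X: "X \<in> {0..L}" unfolding X_def by (rule xf_in[OF Y])
  have YX: "yf X = Y" unfolding X_def by (rule yf_xf[OF Y])
  define Gf where "Gf = (\<lambda>x. (A x * phi x + Pt x / F x) * sin (kk * (Y - yf x)) + (kk * (F x * phi x)) * cos (kk * (Y - yf x)))"
  define G' where "G' = (\<lambda>x. sin (kk * (Y - yf x)) * e x * Qx x * (F x * phi x))"
  define h where "h = (\<lambda>t. sin (kk*(Y-t)) * (Qx (xf t) * uu t))"
  have cPF: "continuous_on {0..L} (\<lambda>x. Pt x / F x)"
    by (rule continuous_on_divide[OF Ptc Fc]) (use F_pos in force)
  have Gc: "continuous_on {0..L} Gf" unfolding Gf_def
    by (intro continuous_intros cPF Ac phi_cont Fc yfc)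
  have "(G' has_integral (Gf X - Gf 0)) {0..X}"
  proof (rule fundamental_theorem_of_calculus_interior)
    show "0 \<le> X" using X by auto
    show "continuous_on {0..X} Gf" using Gc by (rule continuous_on_subset) (use X in auto)
    fix x assume "x \<in> {0<..<X}"
    hence x: "x \<in> {0<..<L}" using X by auto
    show "(Gf has_vector_derivative G' x) (at x)"
      unfolding Gf_def G'_def has_real_derivative_iff_has_vector_derivative[symmetric]
      by (rule G_deriv[OF x])
  qed
  moreover have "(G' has_integral integral {0..Y} h) {0..X}"
  proof -
    have hc: "continuous_on {0..BB} h" unfolding h_def by (intro continuous_intros Qtc uuc)
    have "((\<lambda>x. e x * h (yf x)) has_integral integral {0..Y} h) {0..X}"
      using subst_gen[OF hc X] YX by simp
    thus ?thesis
    proof (rule has_integral_eq[rotated])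
      fix x assume "x \<in> {0..X}"
      hence x: "x \<in> {0..L}" using X by auto
      show "e x * h (yf x) = G' x" unfolding h_def G'_def uu_yf[OF x] xf_yf[OF x] by (simp add: mult_ac)
    qed
  qed
  ultimately have eq: "Gf X - Gf 0 = integral {0..Y} h" by (rule has_integral_unique)
  have "Gf X = kk * (F X * phi X)" unfolding Gf_def using YX by simp
  moreover have "uu Y = F X * phi X" unfolding uu_def X_def by simp
  ultimately have GX: "Gf X = kk * uu Y" by simp
  have G0: "Gf 0 = V 0 * sin (kk * Y)" unfolding Gf_def V_def yf0 phi0 by simp
  have "kk * uu Y = V 0 * sin (kk * Y) + integral {0..Y} h" using eq GX G0 by simp
  thus ?thesis unfolding h_def using kk_pos by (simp add: field_simps)
qed

end

lemma pw14: "(x::real) \<ge> 0 \<Longrightarrow> x powr (1/4) = sqrt (sqrt x)"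
proof -
  assume x: "x \<ge> 0"
  have "sqrt (sqrt x) = (x powr (1/2)) powr (1/2)" using x by (simp add: powr_half_sqrt)
  also have "\<dots> = x powr (1/4)" by (simp add: powr_powr)
  finally show ?thesis by simp
qed

lemma pw14_4: "(x::real) \<ge> 0 \<Longrightarrow> (x powr (1/4))^4 = x"
  using pw14 sqrt2_pow4 by simp

lemma pw12_4: "(x::real) \<ge> 0 \<Longrightarrow> (x powr (1/2))^4 = x^2"
  using sqrt_pow4 by (simp add: powr_half_sqrt)

lemma absp2: "\<bar>z::real\<bar> powr 2 = z^2" by simp
lemma absp4: "\<bar>z::real\<bar> powr 4 = z^4"
  by simp

lemma pow32: "(x::real) > 0 \<Longrightarrow> x powr (3/2) = (sqrt x)^3"
proof -
  assume x: "x > 0"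
  have "(sqrt x)^3 = (x powr (1/2))^3" using x by (simp add: powr_half_sqrt)
  also have "\<dots> = x powr (real 3 * (1/2))" using x by (intro powr_power) simp
  finally show ?thesis by simp
qed

lemma cont_bound:
  fixes g :: "real \<Rightarrow> real"
  assumes "continuous_on {a..b} g"
  shows "\<exists>K. \<forall>x\<in>{a..b}. \<bar>g x\<bar> \<le> K"
proof -
  have "compact (g ` {a..b})" by (rule compact_continuous_image[OF assms compact_Icc])
  hence "bounded (g ` {a..b})" by (rule compact_imp_bounded)
  then obtain K where "\<forall>y\<in>g ` {a..b}. norm y \<le> K" by (auto simp: bounded_pos)
  thus ?thesis by auto
qed

lemma sup_bound:
  fixes g :: "real \<Rightarrow> real"
  assumes "continuous_on {a..b} g" "x \<in> {a<..<b}"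
  shows "\<bar>g x\<bar> \<le> supnorm {a<..<b} g"
proof -
  obtain K where K: "\<forall>x\<in>{a..b}. \<bar>g x\<bar> \<le> K" using cont_bound[OF assms(1)] by blast
  have "bdd_above ((\<lambda>x. \<bar>g x\<bar>) ` {a<..<b})" using K by (auto intro!: bdd_aboveI[of _ K])
  thus ?thesis unfolding supnorm_def using assms(2) by (rule cSUP_upper[rotated])
qed

lemma integral_nonneg_any:
  fixes f :: "real \<Rightarrow> real"
  assumes "\<And>x. x \<in> S \<Longrightarrow> f x \<ge> 0" shows "integral S f \<ge> 0"
proof (cases "f integrable_on S")
  case True thus ?thesis using assms by (rule integral_nonneg)
next
  case False thus ?thesis by (simp add: not_integrable_integral)
qed

lemma Lnorm2: "(Lnorm a b 2 g)^4 = (integral {a..b} (\<lambda>x. (g x)^2))^2"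
proof -
  have "integral {a..b} (\<lambda>x. (g x)^2) \<ge> 0" by (rule integral_nonneg_any) simp
  thus ?thesis unfolding Lnorm_def absp2 by (simp add: pw12_4)
qed

lemma Lnorm4: "(Lnorm a b 4 g)^4 = integral {a..b} (\<lambda>x. (g x)^4)"
proof -
  have "integral {a..b} (\<lambda>x. (g x)^4) \<ge> 0" by (rule integral_nonneg_any) simp
  thus ?thesis unfolding Lnorm_def absp4 by (simp add: pw14_4)
qed

lemma loc_coeff_eq: "loc_coeff a b g = (integral {a..b} (\<lambda>x. (g x)^2))^2 / integral {a..b} (\<lambda>x. (g x)^4)"
  unfolding loc_coeff_def Lnorm2 Lnorm4 ..

context LT begin

definition Pw :: "real \<Rightarrow> real" where "Pw x = p x powr (-1/2) * w x powr (-3/2)"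
definition Jw :: "real \<Rightarrow> real" where "Jw x = p x powr (1/2) * w x powr (3/2)"

lemma Jw_pos: "x \<in> {0..L} \<Longrightarrow> Jw x > 0" unfolding Jw_def using p_pos[of x] w_pos[of x] by simp

lemma Pw_J: assumes x: "x \<in> {0..L}" shows "Pw x = 1 / Jw x"
proof -
  have "p x powr (-1/2) = 1 / p x powr (1/2)" using powr_minus_divide[of "p x" "1/2"] by simp
  moreover have "w x powr (-3/2) = 1 / w x powr (3/2)" using powr_minus_divide[of "w x" "3/2"] by simp
  ultimately show ?thesis unfolding Pw_def Jw_def by simp
qed

lemma Pw_pos: "x \<in> {0..L} \<Longrightarrow> Pw x > 0" using Pw_J Jw_pos by simp

lemma p_ne: "\<forall>x\<in>{0..L}. p x \<noteq> 0" using p_pos by (metis less_irrefl)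
lemma w_ne: "\<forall>x\<in>{0..L}. w x \<noteq> 0" using w_pos by (metis less_irrefl)

lemma Jwc: "continuous_on {0..L} Jw"
proof -
  have c1: "continuous_on {0..L} (\<lambda>x. p x powr (1/2))" by (rule continuous_on_powr[OF pc continuous_on_const p_ne])
  have c2: "continuous_on {0..L} (\<lambda>x. w x powr (3/2))" by (rule continuous_on_powr[OF wc continuous_on_const w_ne])
  show ?thesis unfolding Jw_def[abs_def] by (rule continuous_on_mult[OF c1 c2])
qed

lemma Pwc: "continuous_on {0..L} Pw"
proof -
  have jn: "\<forall>x\<in>{0..L}. Jw x \<noteq> 0" using Jw_pos by (metis less_irrefl)
  have "continuous_on {0..L} (\<lambda>x. 1 / Jw x)"
    by (rule continuous_on_divide[OF continuous_on_const Jwc jn])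
  thus ?thesis by (rule continuous_on_eq) (simp add: Pw_J)
qed

lemma alg3: "(a::real) > 0 \<Longrightarrow> b > 0 \<Longrightarrow> (a / b) * (a^2 * b^2) * (1 / (b * a^3)) = 1"
  by (simp add: field_simps power2_eq_square power3_eq_cube)

lemma eF4Pw: assumes x: "x \<in> {0..L}" shows "e x * (F x)^4 * Pw x = 1"
proof -
  have wp: "w x > 0" "p x > 0" using w_pos[OF x] p_pos[OF x] by auto
  have sw: "sqrt (w x) > 0" and sp: "sqrt (p x) > 0" using wp by auto
  have e1: "e x = sqrt (w x) / sqrt (p x)" unfolding e_def by (simp add: real_sqrt_divide)
  have w3: "w x powr (3/2) = (sqrt (w x))^3" by (rule pow32[OF wp(1)])
  have p1: "p x powr (1/2) = sqrt (p x)" using wp by (simp add: powr_half_sqrt)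
  have "Pw x = 1 / (sqrt (p x) * (sqrt (w x))^3)" using Pw_J[OF x] unfolding Jw_def w3 p1 .
  moreover have "(F x)^4 = (sqrt (w x))^2 * (sqrt (p x))^2" using F4[OF x] wp by simp
  ultimately show ?thesis unfolding e1 using alg3[OF sw sp] by simp
qed

lemma phi2_eq: "integral {0..L} (\<lambda>x. (phi x)^2) = integral {0..BB} (\<lambda>t. (uu t)^2 / w (xf t))"
proof -
  have hc: "continuous_on {0..BB} (\<lambda>t. (uu t)^2 / w (xf t))"
  proof (rule continuous_on_divide)
    show "continuous_on {0..BB} (\<lambda>t. (uu t)^2)" by (intro continuous_intros uuc)
    show "continuous_on {0..BB} (\<lambda>t. w (xf t))" by (rule comp_c[OF wc])
    show "\<forall>t\<in>{0..BB}. w (xf t) \<noteq> 0" using w_ne xf_in by blast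
  qed
  have "integral {0..L} (\<lambda>x. (phi x)^2) = integral {0..L} (\<lambda>x. e x * ((uu (yf x))^2 / w (xf (yf x))))"
  proof (rule integral_cong)
    fix x assume x: "x \<in> {0..L}"
    have "e x * ((uu (yf x))^2 / w (xf (yf x))) = (e x * (F x)^2) * (phi x)^2 / w x"
      unfolding uu_yf[OF x] xf_yf[OF x] by (simp add: power_mult_distrib)
    also have "\<dots> = (phi x)^2" unfolding eF[OF x] using w_pos[OF x] by simp
    finally show "(phi x)^2 = e x * ((uu (yf x))^2 / w (xf (yf x)))" by simp
  qed
  also have "\<dots> = integral {0..BB} (\<lambda>t. (uu t)^2 / w (xf t))" by (rule subst_full[OF hc])
  finally show ?thesis .
qed

lemma phi4_eq: "integral {0..L} (\<lambda>x. (phi x)^4) = integral {0..BB} (\<lambda>t. (uu t)^4 * Pw (xf t))"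
proof -
  have hc: "continuous_on {0..BB} (\<lambda>t. (uu t)^4 * Pw (xf t))"
    by (intro continuous_intros uuc comp_c Pwc)
  have "integral {0..L} (\<lambda>x. (phi x)^4) = integral {0..L} (\<lambda>x. e x * ((uu (yf x))^4 * Pw (xf (yf x))))"
  proof (rule integral_cong)
    fix x assume x: "x \<in> {0..L}"
    have "e x * ((uu (yf x))^4 * Pw (xf (yf x))) = (e x * (F x)^4 * Pw x) * (phi x)^4"
      unfolding uu_yf[OF x] xf_yf[OF x] by (simp add: power_mult_distrib)
    also have "\<dots> = (phi x)^4" unfolding eF4Pw[OF x] by simp
    finally show "(phi x)^4 = e x * ((uu (yf x))^4 * Pw (xf (yf x)))" by simp
  qed
  also have "\<dots> = integral {0..BB} (\<lambda>t. (uu t)^4 * Pw (xf t))" by (rule subst_full[OF hc])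
  finally show ?thesis .
qed

lemma uu_end: "t \<in> {0..BB} \<Longrightarrow> t \<notin> {0<..<BB} \<Longrightarrow> uu t = 0"
  using uu0 uuB by (cases "t = 0") auto

lemma sup_pos:
  assumes gc: "continuous_on {0..L} g" and gp: "\<And>x. x \<in> {0..L} \<Longrightarrow> g x > 0"
  shows "supnorm {0<..<L} g > 0" and "\<And>x. x \<in> {0<..<L} \<Longrightarrow> g x \<le> supnorm {0<..<L} g"
proof -
  show le: "g x \<le> supnorm {0<..<L} g" if "x \<in> {0<..<L}" for x
    using sup_bound[OF gc that] by simp
  have "L/2 \<in> {0<..<L}" using L_pos by auto
  hence "g (L/2) > 0" "g (L/2) \<le> supnorm {0<..<L} g" using gp le by auto
  thus "supnorm {0<..<L} g > 0" by linarith
qed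

end

context LT begin

theorem main:
  fixes Qf :: "real \<Rightarrow> real" and a b :: real
  assumes Qf_def: "Qf = (\<lambda>y. deriv (deriv ff) y / ff y + q (xf y) / w (xf y))"
    and a_def: "a = BB * supnorm {0<..<BB} Qf / (2 * sqrt lam)"
    and b_def: "b = (BB ^ 3 / 12 + 5 * BB / (32 * lam) + 5 / (32 * lam powr (3/2))) powr (1/4) * Lnorm 0 BB 4 Qf / sqrt lam"
    and a_lt: "a < 1" and b_lt: "b < 1"
    and nz: "\<exists>x\<in>{0..L}. phi x \<noteq> 0"
  shows "(supnorm {0<..<L} w) powr (-2) * (supnorm {0<..<L} (\<lambda>x. p x powr (-1/2) * w x powr (-3/2))) powr (-1)
           * ((1 - b) / (1 + a)) ^ 4
         \<le> loc_coeff 0 L phi / loc_coeff 0 BB (\<lambda>y. sin (sqrt lam * y))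
       \<and> loc_coeff 0 L phi / loc_coeff 0 BB (\<lambda>y. sin (sqrt lam * y))
         \<le> (supnorm {0<..<L} (\<lambda>x. 1 / w x)) ^ 2 * supnorm {0<..<L} (\<lambda>x. p x powr (1/2) * w x powr (3/2))
           * ((1 + b) / (1 - a)) ^ 4"
proof -
  define M where "M = supnorm {0<..<BB} Qf"
  define Qt where "Qt = (\<lambda>t. Qx (xf t))"
  have Qf_eq: "Qf y = Qt y" if "y \<in> {0<..<BB}" for y unfolding Qf_def Qt_def ff_def[symmetric] using Q_eq[OF that] by simp
  obtain K where K: "\<forall>t\<in>{0..BB}. \<bar>Qt t\<bar> \<le> K" using cont_bound[OF Qtc] unfolding Qt_def by blast
  have bdd: "bdd_above ((\<lambda>y. \<bar>Qf y\<bar>) ` {0<..<BB})"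
  proof (rule bdd_aboveI2)
    fix y :: real assume y: "y \<in> {0<..<BB}"
    hence "y \<in> {0..BB}" by auto
    thus "\<bar>Qf y\<bar> \<le> K" using K Qf_eq[OF y] by simp
  qed
  have QM: "\<bar>Qt y\<bar> \<le> M" if "y \<in> {0<..<BB}" for y
    unfolding M_def supnorm_def using cSUP_upper[OF that bdd] Qf_eq[OF that] by simp
  have M0: "M \<ge> 0"
  proof -
    have "\<bar>Qt (BB/2)\<bar> \<le> M" by (rule QM) (use BB_pos in auto)
    thus ?thesis by linarith
  qed
  have k: "kk = sqrt lam" by (rule kk_def)
  have a_eq: "a = BB * M / (2 * kk)" unfolding a_def M_def k ..
  have a0: "a \<ge> 0" unfolding a_eq using M0 BB_pos kk_pos by simp
  have gM: "(Qt t * uu t)^2 \<le> M^2 * (uu t)^2" if t: "t \<in> {0..BB}" for t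
  proof (cases "t \<in> {0<..<BB}")
    case True
    have "(Qt t)^2 \<le> M^2" using QM[OF True] M0 by (metis abs_le_square_iff abs_of_nonneg)
    thus ?thesis by (simp add: power_mult_distrib mult_right_mono)
  next
    case False thus ?thesis using uu_end[OF t] by simp
  qed
  have rep': "uu Y = (V 0 / kk) * sin (kk*Y) + integral {0..Y} (\<lambda>t. sin (kk*(Y-t)) * (Qt t * uu t)) / kk"
    if "Y \<in> {0..BB}" for Y using rep[OF that] unfolding Qt_def .
  have Qtc': "continuous_on {0..BB} Qt" unfolding Qt_def by (rule Qtc)
  note P = perturb[OF BB_pos kk_pos uuc Qtc' rep' gM]
  define I4Q where "I4Q = integral {0..BB} (\<lambda>Y. (Qt Y)^4)"
  have I4Q0: "I4Q \<ge> 0" unfolding I4Q_def by (rule integral_nonneg_any) simp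
  have LQ: "Lnorm 0 BB 4 Qf = sqrt (sqrt I4Q)"
  proof -
    have "integral {0..BB} (\<lambda>x. \<bar>Qf x\<bar> powr 4) = I4Q" unfolding I4Q_def
    proof (rule integral_spike[where S="{0, BB}"])
      show "negligible {0, BB}" by simp
      fix x assume "x \<in> {0..BB} - {0, BB}"
      hence "x \<in> {0<..<BB}" by auto
      thus "(Qt x)^4 = \<bar>Qf x\<bar> powr 4" unfolding absp4 using Qf_eq[of x] by simp
    qed
    thus ?thesis unfolding Lnorm_def using I4Q0 by (simp add: pw14)
  qed
  define Cb where "Cb = BB^3/12 + 5*BB/(32*kk^2) + 5/(32*kk^3)"
  have Cb0: "Cb \<ge> 0" unfolding Cb_def using BB_pos kk_pos by simp
  have Cb_eq: "BB ^ 3 / 12 + 5 * BB / (32 * lam) + 5 / (32 * lam powr (3/2)) = Cb"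
  proof -
    have l2: "lam powr (3/2) = kk^3" using pow32[OF lam_pos] k by simp
    show ?thesis unfolding Cb_def by (simp only: l2 kk_sq)
  qed
  have b_eq: "b = Cb powr (1/4) * sqrt (sqrt I4Q) / kk" unfolding b_def Cb_eq LQ k ..
  have b0: "b \<ge> 0" unfolding b_eq using Cb0 I4Q0 kk_pos by simp
  have b4: "b^4 = Cb * I4Q / kk^4"
  proof -
    have "b^4 = (Cb powr (1/4))^4 * (sqrt (sqrt I4Q))^4 / kk^4" unfolding b_eq by (simp only: power_mult_distrib power_divide)
    thus ?thesis unfolding pw14_4[OF Cb0] sqrt2_pow4[OF I4Q0] .
  qed
  define c where "c = V 0 / kk"
  have R2: "integral {0..BB} (\<lambda>x. (uu x - c * sin (kk * x))^2) \<le> a^2 * integral {0..BB} (\<lambda>x. (uu x)^2)"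
    using P(1) unfolding a_eq c_def .
  have R4: "integral {0..BB} (\<lambda>x. (uu x - c * sin (kk * x))^4) \<le> b^4 * integral {0..BB} (\<lambda>x. (uu x)^4)"
    using P(2) unfolding b4 c_def Cb_def[symmetric] I4Q_def[symmetric] by (simp add: mult_ac)
  obtain x0 where x0: "x0 \<in> {0..L}" "phi x0 \<noteq> 0" using nz by blast
  have Y0: "yf x0 \<in> {0..BB}" using x0(1) yf_image by auto
  have uY0: "uu (yf x0) \<noteq> 0" unfolding uu_yf[OF x0(1)] using F_pos[OF x0(1)] x0(2) by simp
  have u2: "integral {0..BB} (\<lambda>x. (uu x)^2) > 0"
    by (rule integral_pos_cont[OF _ _ BB_pos Y0]) (intro continuous_intros uuc, simp, simp add: uY0)
  have u4: "integral {0..BB} (\<lambda>x. (uu x)^4) > 0"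
    by (rule integral_pos_cont[OF _ _ BB_pos Y0]) (intro continuous_intros uuc, simp, simp add: uY0)
  define Y1 where "Y1 = min BB (pi / (2 * kk))"
  have Y1: "Y1 \<in> {0..BB}" unfolding Y1_def using BB_pos kk_pos by auto
  have sY1: "sin (kk * Y1) \<noteq> 0"
  proof -
    have p0: "kk * Y1 > 0" unfolding Y1_def using BB_pos kk_pos by simp
    moreover have "kk * Y1 \<le> kk * (pi / (2 * kk))" unfolding Y1_def using kk_pos by (intro mult_left_mono) auto
    hence "kk * Y1 < pi" using kk_pos pi_gt_zero p0 by simp
    ultimately show ?thesis using sin_gt_zero by force
  qed
  have P2: "integral {0..BB} (\<lambda>x. (sin (kk * x))^2) > 0"
    by (rule integral_pos_cont[OF _ _ BB_pos Y1]) (intro continuous_intros, simp, simp add: sY1)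
  have P4: "integral {0..BB} (\<lambda>x. (sin (kk * x))^4) > 0"
    by (rule integral_pos_cont[OF _ _ BB_pos Y1]) (intro continuous_intros, simp, simp add: sY1)
  have sc': "continuous_on {0..BB} (\<lambda>x. sin (kk * x))" by (intro continuous_intros)
  note RB = ratio_bounds[OF uuc sc' a0 a_lt b0 b_lt R2 R4 u2 u4 P2 P4]
  define I2u where "I2u = integral {0..BB} (\<lambda>x. (uu x)^2)"
  define I4u where "I4u = integral {0..BB} (\<lambda>x. (uu x)^4)"
  define I2P where "I2P = integral {0..BB} (\<lambda>x. (sin (kk * x))^2)"
  define I4P where "I4P = integral {0..BB} (\<lambda>x. (sin (kk * x))^4)"
  define I2f where "I2f = integral {0..L} (\<lambda>x. (phi x)^2)"
  define I4f where "I4f = integral {0..L} (\<lambda>x. (phi x)^4)"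
  define Lo where "Lo = ((1 - b) / (1 + a))^4"
  define Hi where "Hi = ((1 + b) / (1 - a))^4"
  define ru where "ru = (I2u^2 / I4u) / (I2P^2 / I4P)"
  have rlo: "Lo \<le> ru" unfolding Lo_def ru_def I2u_def I4u_def I2P_def I4P_def by (rule RB(1))
  have rhi: "ru \<le> Hi" unfolding Hi_def ru_def I2u_def I4u_def I2P_def I4P_def by (rule RB(2))
  have Lo0: "Lo \<ge> 0" unfolding Lo_def using a0 b_lt by simp
  define Wm where "Wm = supnorm {0<..<L} w"
  define Pm where "Pm = supnorm {0<..<L} (\<lambda>x. p x powr (-1/2) * w x powr (-3/2))"
  define Im where "Im = supnorm {0<..<L} (\<lambda>x. 1 / w x)"
  define Jm where "Jm = supnorm {0<..<L} (\<lambda>x. p x powr (1/2) * w x powr (3/2))"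
  have PwF: "(\<lambda>x. p x powr (-1/2) * w x powr (-3/2)) = Pw" by (rule ext) (simp add: Pw_def)
  have JwF: "(\<lambda>x. p x powr (1/2) * w x powr (3/2)) = Jw" by (rule ext) (simp add: Jw_def)
  have iwc: "continuous_on {0..L} (\<lambda>x. 1 / w x)" by (rule continuous_on_divide[OF continuous_on_const wc w_ne])
  have iwp: "\<And>x. x \<in> {0..L} \<Longrightarrow> 1 / w x > 0" using w_pos by simp
  have SW1: "Wm > 0" unfolding Wm_def by (rule sup_pos(1)[OF wc]) (use w_pos in blast)
  have SW2: "w x \<le> Wm" if "x \<in> {0<..<L}" for x unfolding Wm_def by (rule sup_pos(2)[OF wc _ that]) (use w_pos in blast)
  have SP1: "Pm > 0" unfolding Pm_def PwF by (rule sup_pos(1)[OF Pwc]) (use Pw_pos in blast)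
  have SP2: "Pw x \<le> Pm" if "x \<in> {0<..<L}" for x unfolding Pm_def PwF by (rule sup_pos(2)[OF Pwc _ that]) (use Pw_pos in blast)
  have SI1: "Im > 0" unfolding Im_def by (rule sup_pos(1)[OF iwc]) (use iwp in blast)
  have SI2: "1 / w x \<le> Im" if "x \<in> {0<..<L}" for x unfolding Im_def by (rule sup_pos(2)[OF iwc _ that]) (use iwp in blast)
  have SJ1: "Jm > 0" unfolding Jm_def JwF by (rule sup_pos(1)[OF Jwc]) (use Jw_pos in blast)
  have SJ2: "Jw x \<le> Jm" if "x \<in> {0<..<L}" for x unfolding Jm_def JwF by (rule sup_pos(2)[OF Jwc _ that]) (use Jw_pos in blast)
  have h2c: "continuous_on {0..BB} (\<lambda>t. (uu t)^2 / w (xf t))"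
  proof (rule continuous_on_divide)
    show "continuous_on {0..BB} (\<lambda>t. (uu t)^2)" by (intro continuous_intros uuc)
    show "continuous_on {0..BB} (\<lambda>t. w (xf t))" by (rule comp_c[OF wc])
    show "\<forall>t\<in>{0..BB}. w (xf t) \<noteq> 0" using w_ne xf_in by blast
  qed
  have h4c: "continuous_on {0..BB} (\<lambda>t. (uu t)^4 * Pw (xf t))" by (intro continuous_intros uuc comp_c Pwc)
  have u2c: "continuous_on {0..BB} (\<lambda>t. (uu t)^2)" by (intro continuous_intros uuc)
  have u4c: "continuous_on {0..BB} (\<lambda>t. (uu t)^4)" by (intro continuous_intros uuc)
  have pt: "(1/Wm) * (uu t)^2 \<le> (uu t)^2 / w (xf t) \<and> (uu t)^2 / w (xf t) \<le> Im * (uu t)^2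
          \<and> (uu t)^4 * Pw (xf t) \<le> Pm * (uu t)^4 \<and> (1/Jm) * (uu t)^4 \<le> (uu t)^4 * Pw (xf t)"
    if t: "t \<in> {0..BB}" for t
  proof (cases "t \<in> {0<..<BB}")
    case True
    define x where "x = xf t"
    have xo: "x \<in> {0<..<L}" unfolding x_def by (rule xf_int[OF True])
    hence xi: "x \<in> {0..L}" by auto
    have u2: "(uu t)^2 \<ge> 0" and u4: "(uu t)^4 \<ge> 0" by simp_all
    have "1/Wm \<le> 1 / w x" using SW2[OF xo] w_pos[OF xi] by (simp add: frac_le)
    hence A1: "(1/Wm) * (uu t)^2 \<le> (uu t)^2 / w x" using mult_right_mono[OF _ u2] by (simp add: divide_inverse mult.commute)
    have "1 / w x \<le> Im" using SI2[OF xo] .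
    hence A2: "(uu t)^2 / w x \<le> Im * (uu t)^2" using mult_right_mono[OF _ u2] by (simp add: divide_inverse mult.commute)
    have "Pw x \<le> Pm" using SP2[OF xo] .
    hence A3: "(uu t)^4 * Pw x \<le> Pm * (uu t)^4" using mult_left_mono[OF _ u4] by (simp add: mult.commute)
    have "1/Jm \<le> 1 / Jw x" using SJ2[OF xo] Jw_pos[OF xi] by (simp add: frac_le)
    hence "1/Jm \<le> Pw x" using Pw_J[OF xi] by simp
    hence "1/Jm * (uu t)^4 \<le> Pw x * (uu t)^4" by (rule mult_right_mono[OF _ u4])
    hence A4: "(1/Jm) * (uu t)^4 \<le> (uu t)^4 * Pw x" by (simp only: mult.commute[of "Pw x"])
    show ?thesis using A1 A2 A3 A4 unfolding x_def by blast
  next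
    case False thus ?thesis using uu_end[OF t] by simp
  qed
  have I2f_eq: "I2f = integral {0..BB} (\<lambda>t. (uu t)^2 / w (xf t))" unfolding I2f_def by (rule phi2_eq)
  have I4f_eq: "I4f = integral {0..BB} (\<lambda>t. (uu t)^4 * Pw (xf t))" unfolding I4f_def by (rule phi4_eq)
  have B1: "(1/Wm) * I2u \<le> I2f"
  proof -
    have "integral {0..BB} (\<lambda>t. (1/Wm) * (uu t)^2) \<le> integral {0..BB} (\<lambda>t. (uu t)^2 / w (xf t))"
      by (rule integral_le) (use pt SW1 SP1 SI1 SJ1 in \<open>auto intro!: integrable_continuous_real h2c u2c continuous_intros\<close>)
    thus ?thesis unfolding I2f_eq I2u_def integral_cmul_real .
  qed
  have B2: "I2f \<le> Im * I2u"
  proof -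
    have "integral {0..BB} (\<lambda>t. (uu t)^2 / w (xf t)) \<le> integral {0..BB} (\<lambda>t. Im * (uu t)^2)"
      by (rule integral_le) (use pt SW1 SP1 SI1 SJ1 in \<open>auto intro!: integrable_continuous_real h2c u2c continuous_intros\<close>)
    thus ?thesis unfolding I2f_eq I2u_def integral_cmul_real .
  qed
  have B3: "I4f \<le> Pm * I4u"
  proof -
    have "integral {0..BB} (\<lambda>t. (uu t)^4 * Pw (xf t)) \<le> integral {0..BB} (\<lambda>t. Pm * (uu t)^4)"
      by (rule integral_le) (use pt SW1 SP1 SI1 SJ1 in \<open>auto intro!: integrable_continuous_real h4c u4c continuous_intros\<close>)
    thus ?thesis unfolding I4f_eq I4u_def integral_cmul_real .
  qed
  have B4: "(1/Jm) * I4u \<le> I4f"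
  proof -
    have "integral {0..BB} (\<lambda>t. (1/Jm) * (uu t)^4) \<le> integral {0..BB} (\<lambda>t. (uu t)^4 * Pw (xf t))"
      by (rule integral_le) (use pt SW1 SP1 SI1 SJ1 in \<open>auto intro!: integrable_continuous_real h4c u4c continuous_intros\<close>)
    thus ?thesis unfolding I4f_eq I4u_def integral_cmul_real .
  qed
  have I2u0: "I2u > 0" unfolding I2u_def by (rule u2)
  have I4u0: "I4u > 0" unfolding I4u_def by (rule u4)
  have I2P0: "I2P > 0" unfolding I2P_def by (rule P2)
  have I4P0: "I4P > 0" unfolding I4P_def by (rule P4)
  have I2f0: "I2f > 0" using B1 I2u0 SW1 by (smt (verit) divide_pos_pos mult_pos_pos)
  have I4f0: "I4f > 0" using B4 I4u0 SJ1 by (smt (verit) divide_pos_pos mult_pos_pos)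
  define aP where "aP = I2P^2 / I4P"
  have aP0: "aP > 0" unfolding aP_def using I2P0 I4P0 by simp
  have LC1: "loc_coeff 0 L phi = I2f^2 / I4f" unfolding loc_coeff_eq I2f_def I4f_def ..
  have LC2: "loc_coeff 0 BB (\<lambda>y. sin (sqrt lam * y)) = aP" unfolding loc_coeff_eq aP_def I2P_def I4P_def k ..
  have ru_eq: "ru = (I2u^2 / I4u) / aP" unfolding ru_def aP_def ..
  have lowf: "(1 / (Wm^2 * Pm)) * (I2u^2 / I4u) \<le> I2f^2 / I4f"
  proof -
    have "(I2u / Wm)^2 \<le> I2f^2" using B1 I2u0 SW1 by (intro power_mono) (auto simp: divide_inverse mult.commute)
    hence "(I2u / Wm)^2 / (Pm * I4u) \<le> I2f^2 / I4f" using B3 I4f0 by (intro frac_le) auto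
    moreover have "(I2u / Wm)^2 / (Pm * I4u) = (1 / (Wm^2 * Pm)) * (I2u^2 / I4u)"
      by (simp add: power_divide)
    ultimately show ?thesis by simp
  qed
  have upf: "I2f^2 / I4f \<le> (Im^2 * Jm) * (I2u^2 / I4u)"
  proof -
    have "I2f^2 \<le> (Im * I2u)^2" using B2 I2f0 by (intro power_mono) auto
    hence "I2f^2 / I4f \<le> (Im * I2u)^2 / ((1/Jm) * I4u)" using B4 I4u0 SJ1 I2f0 by (intro frac_le) auto
    moreover have "(Im * I2u)^2 / ((1/Jm) * I4u) = (Im^2 * Jm) * (I2u^2 / I4u)" using SJ1 I4u0
      by (simp add: power_mult_distrib field_simps)
    ultimately show ?thesis by (rule ord_le_eq_trans)
  qed
  have cW: "Wm powr (-2) * Pm powr (-1) = 1 / (Wm^2 * Pm)"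
    using SW1 SP1 by (simp add: powr_minus divide_inverse)
  have lower: "Wm powr (-2) * Pm powr (-1) * Lo \<le> (I2f^2 / I4f) / aP"
  proof -
    have "Wm powr (-2) * Pm powr (-1) * Lo \<le> (1 / (Wm^2 * Pm)) * ru"
      unfolding cW using rlo SW1 SP1 by (intro mult_left_mono) auto
    also have "\<dots> = ((1 / (Wm^2 * Pm)) * (I2u^2 / I4u)) / aP" unfolding ru_eq by simp
    also have "\<dots> \<le> (I2f^2 / I4f) / aP" using lowf aP0 by (intro divide_right_mono) auto
    finally show ?thesis .
  qed
  have upper: "(I2f^2 / I4f) / aP \<le> Im^2 * Jm * Hi"
  proof -
    have "(I2f^2 / I4f) / aP \<le> ((Im^2 * Jm) * (I2u^2 / I4u)) / aP" using upf aP0 by (intro divide_right_mono) auto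
    also have "\<dots> = (Im^2 * Jm) * ru" unfolding ru_eq by simp
    also have "\<dots> \<le> (Im^2 * Jm) * Hi" using rhi SI1 SJ1 by (intro mult_left_mono) auto
    finally show ?thesis .
  qed
  show ?thesis
    unfolding LC1 LC2 using lower upper unfolding Wm_def Pm_def Im_def Jm_def Lo_def Hi_def by blast
qed

end

theorem theorem1p1:
  fixes L lam :: real and p w q phi dphi ddphi yf xf f Q Phi :: "real \<Rightarrow> real"
    and B a b :: real
  assumes L_pos: "L > 0"
    and p_C2: "C2_on 0 L p" and w_C2: "C2_on 0 L w"
    and p_pos: "\<forall>x\<in>{0..L}. p x > 0" and w_pos: "\<forall>x\<in>{0..L}. w x > 0"
    and p_inv_bdd: "bdd_above ((\<lambda>x. \<bar>1 / p x\<bar>) ` {0<..<L})"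
    and w_inv_bdd: "bdd_above ((\<lambda>x. \<bar>1 / w x\<bar>) ` {0<..<L})"
    and q_cont: "continuous_on {0..L} q" and q_nonneg: "\<forall>x\<in>{0..L}. q x \<ge> 0"
    and lam_pos: "lam > 0"
    and phi_cont: "continuous_on {0..L} phi"
    and phi_d1: "\<forall>x\<in>{0<..<L}. (phi has_real_derivative dphi x) (at x)"
    and phi_d2: "\<forall>x\<in>{0<..<L}. ((\<lambda>t. p t * dphi t) has_real_derivative ddphi x) (at x)"
    and phi_eq: "\<forall>x\<in>{0<..<L}. - ddphi x / w x + q x / w x * phi x = lam * phi x"
    and phi_bc: "phi 0 = 0" "phi L = 0"
    and phi_nz: "\<exists>x\<in>{0..L}. phi x \<noteq> 0"
    and yf_def: "yf = (\<lambda>x. integral {0..x} (\<lambda>s. sqrt (w s / p s)))"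
    and B_def: "B = integral {0..L} (\<lambda>s. sqrt (w s / p s))"
    and xf_def: "xf = the_inv_into {0..L} yf"
    and f_def: "f = (\<lambda>y. (w (xf y) * p (xf y)) powr (1/4))"
    and Q_def: "Q = (\<lambda>y. deriv (deriv f) y / f y + q (xf y) / w (xf y))"
    and a_def: "a = B * supnorm {0<..<B} Q / (2 * sqrt lam)"
    and b_def: "b = (B ^ 3 / 12 + 5 * B / (32 * lam) + 5 / (32 * lam powr (3/2))) powr (1/4)
                    * Lnorm 0 B 4 Q / sqrt lam"
    and Phi_def: "Phi = (\<lambda>y. sin (sqrt lam * y))"
    and a_lt: "a < 1" and b_lt: "b < 1"
  shows "(supnorm {0<..<L} w) powr (-2) * (supnorm {0<..<L} (\<lambda>x. p x powr (-1/2) * w x powr (-3/2))) powr (-1)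
           * ((1 - b) / (1 + a)) ^ 4
         \<le> loc_coeff 0 L phi / loc_coeff 0 B Phi
       \<and> loc_coeff 0 L phi / loc_coeff 0 B Phi
         \<le> (supnorm {0<..<L} (\<lambda>x. 1 / w x)) ^ 2 * supnorm {0<..<L} (\<lambda>x. p x powr (1/2) * w x powr (3/2))
           * ((1 + b) / (1 - a)) ^ 4"
proof -
  obtain p1 p2 where pd: "\<forall>x\<in>{0..L}. (p has_real_derivative p1 x) (at x within {0..L})"
      "\<forall>x\<in>{0..L}. (p1 has_real_derivative p2 x) (at x within {0..L})" "continuous_on {0..L} p2"
    using p_C2 unfolding C2_on_def by blast
  obtain w1 w2 where wd: "\<forall>x\<in>{0..L}. (w has_real_derivative w1 x) (at x within {0..L})"
      "\<forall>x\<in>{0..L}. (w1 has_real_derivative w2 x) (at x within {0..L})" "continuous_on {0..L} w2"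
    using w_C2 unfolding C2_on_def by blast
  interpret T: LT L lam p w p1 p2 w1 w2 q phi dphi ddphi
    using L_pos pd wd p_pos w_pos q_cont lam_pos phi_cont phi_d1 phi_d2 phi_eq phi_bc
    by unfold_locales auto
  have e_eq: "(\<lambda>s. sqrt (w s / p s)) = T.e" by (rule ext) (simp add: T.e_def)
  have yf_eq: "yf = T.yf" unfolding yf_def e_eq by (rule ext) (simp add: T.yf_def)
  have B_eq: "B = T.BB" unfolding B_def e_eq T.BB_def T.yf_def ..
  have xf_eq: "xf = T.xf" unfolding xf_def yf_eq T.xf_def ..
  have f_eq: "f = T.ff" unfolding f_def xf_eq by (rule ext) (simp add: T.ff_def T.F_def)
  have Q_eq: "Q = (\<lambda>y. deriv (deriv T.ff) y / T.ff y + q (T.xf y) / w (T.xf y))"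
    unfolding Q_def f_eq xf_eq ..
  have a_eq: "a = T.BB * supnorm {0<..<T.BB} Q / (2 * sqrt lam)" unfolding a_def B_eq ..
  have b_eq: "b = (T.BB ^ 3 / 12 + 5 * T.BB / (32 * lam) + 5 / (32 * lam powr (3/2))) powr (1/4) * Lnorm 0 T.BB 4 Q / sqrt lam"
    unfolding b_def B_eq ..
  show ?thesis unfolding Phi_def B_eq
    by (rule T.main[OF Q_eq a_eq b_eq a_lt b_lt phi_nz])
qed

end
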